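(* Under the assumptions (A1), (A2), (A3) below, with the notation of the context: (1) for every $\varphi\in C([-q,0],\mathbb R)$ and every $t>0$, $|x(\varphi)(t)-z_h(\varphi)([t]_h)|\to0$ as $h\to0$ (along $h=q/k$, $k\to\infty$); (2) for all sufficiently small $h=q/k$, the zero solution of the difference equation with variable delay $$\zeta_h(n+1)=\zeta_h(n)-\Big(\int_{nh}^{(n+1)h}a(s)\,ds\Big)\zeta_h(n-k_n),\quad n\ge0,\qquad \zeta_h(n)=\varphi(nh),\ n=-k,\dots,0,$$ is uniformly asymptotically stable. Assumptions: $q>0$, $a:[0,\infty)\to[0,\infty)$ continuous, $r:[0,\infty)\to[0,q]$ with $q=\sup_{t\ge0}r(t)$; (A1) the zero solution of $x'(t)=-a(t)x(t-r(t))$ is uniformly asymptotically stable; (A2) $\sup_{t\ge0}|a(t)|<\infty$; (A3) $r$ is uniformly continuous on $[0,\infty)$.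
   Context: $x(\varphi)$ is the solution of $x'(t)=-a(t)x(t-r(t))$, $t\ge0$, with $x=\varphi$ on $[-q,0]$. For $h=q/k$ ($k\ge1$ integer), $[s]_h=\lfloor s/h\rfloor h$, $k_n:=\lfloor r(nh)/h\rfloor\in\{0,\dots,k\}$, and $z_h(\varphi)$ is the continuous function on $[0,\infty)$ (with $z_h(nh)=\varphi(nh)$ for $n=-k,\dots,0$) satisfying $z_h'(t)=-a(t)z_h((i-k_i)h)$ on each $[ih,(i+1)h)$, $i\ge0$; the sequence $\zeta_h(n)=z_h(nh)$ is the solution of the displayed difference equation. The zero solution of the difference equation is uniformly asymptotically stable if it is uniformly stable (for every $\varepsilon>0$ there is $\delta>0$ such that initial data of sup-norm $<\delta$ at any initial time give solutions bounded by $\varepsilon$ afterwards) and uniformly attractive (solutions with small initial data tend to $0$ as $n\to\infty$ uniformly with respect to the initial time). *)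

theory Defs
  imports "HOL-Analysis.Analysis"
begin

definition dde_sol :: "(real \<Rightarrow> real) \<Rightarrow> (real \<Rightarrow> real) \<Rightarrow> real \<Rightarrow> real \<Rightarrow> (real \<Rightarrow> real) \<Rightarrow> bool" where
  "dde_sol a r q \<sigma> x \<longleftrightarrow>
     continuous_on {\<sigma> - q..} x \<and>
     (\<forall>t\<ge>\<sigma>. (x has_real_derivative (- a t * x (t - r t))) (at t within {\<sigma>..}))"

definition dde_UAS :: "(real \<Rightarrow> real) \<Rightarrow> (real \<Rightarrow> real) \<Rightarrow> real \<Rightarrow> bool" where
  "dde_UAS a r q \<longleftrightarrow>
     (\<forall>\<epsilon>>0. \<exists>\<delta>>0. \<forall>\<sigma>\<ge>0. \<forall>x. dde_sol a r q \<sigma> x \<and> (\<forall>\<theta>\<in>{\<sigma> - q..\<sigma>}. \<bar>x \<theta>\<bar> < \<delta>)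
        \<longrightarrow> (\<forall>t\<ge>\<sigma>. \<bar>x t\<bar> < \<epsilon>)) \<and>
     (\<exists>\<delta>0>0. \<forall>\<eta>>0. \<exists>T. \<forall>\<sigma>\<ge>0. \<forall>x. dde_sol a r q \<sigma> x \<and> (\<forall>\<theta>\<in>{\<sigma> - q..\<sigma>}. \<bar>x \<theta>\<bar> < \<delta>0)
        \<longrightarrow> (\<forall>t\<ge>\<sigma> + T. \<bar>x t\<bar> < \<eta>))"

definition grid_floor :: "real \<Rightarrow> real \<Rightarrow> real" where
  "grid_floor h s = of_int \<lfloor>s / h\<rfloor> * h"

definition kn :: "(real \<Rightarrow> real) \<Rightarrow> real \<Rightarrow> int \<Rightarrow> nat" where
  "kn r h n = nat \<lfloor>r (of_int n * h) / h\<rfloor>"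

definition dA :: "(real \<Rightarrow> real) \<Rightarrow> real \<Rightarrow> int \<Rightarrow> real" where
  "dA a h n = integral {of_int n * h .. of_int (n + 1) * h} a"

function zeta :: "(real \<Rightarrow> real) \<Rightarrow> (real \<Rightarrow> real) \<Rightarrow> real \<Rightarrow> (real \<Rightarrow> real) \<Rightarrow> int \<Rightarrow> real" where
  "zeta a r h \<phi> n =
     (if n \<le> 0 then \<phi> (of_int n * h)
      else zeta a r h \<phi> (n - 1) - dA a h (n - 1) * zeta a r h \<phi> (n - 1 - int (kn r h (n - 1))))"
  by pat_completeness auto
termination
  by (relation "Wellfounded.measure (\<lambda>(a, r, h, \<phi>, n). nat n)") auto

definition zh :: "(real \<Rightarrow> real) \<Rightarrow> (real \<Rightarrow> real) \<Rightarrow> real \<Rightarrow> (real \<Rightarrow> real) \<Rightarrow> real \<Rightarrow> real" where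
  "zh a r h \<phi> t =
     (let i = \<lfloor>t / h\<rfloor> in
        zeta a r h \<phi> i - integral {of_int i * h .. t} a * zeta a r h \<phi> (i - int (kn r h i)))"

definition diff_sol :: "(real \<Rightarrow> real) \<Rightarrow> (real \<Rightarrow> real) \<Rightarrow> real \<Rightarrow> int \<Rightarrow> (int \<Rightarrow> real) \<Rightarrow> bool" where
  "diff_sol a r h n0 \<zeta> \<longleftrightarrow>
     (\<forall>n\<ge>n0. \<zeta> (n + 1) = \<zeta> n - dA a h n * \<zeta> (n - int (kn r h n)))"

definition diff_UAS :: "(real \<Rightarrow> real) \<Rightarrow> (real \<Rightarrow> real) \<Rightarrow> real \<Rightarrow> nat \<Rightarrow> bool" where
  "diff_UAS a r h k \<longleftrightarrow>
     (\<forall>\<epsilon>>0. \<exists>\<delta>>0. \<forall>n0\<ge>0. \<forall>\<zeta>. diff_sol a r h n0 \<zeta> \<and> (\<forall>j\<in>{n0 - int k..n0}. \<bar>\<zeta> j\<bar> < \<delta>)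
        \<longrightarrow> (\<forall>n\<ge>n0. \<bar>\<zeta> n\<bar> < \<epsilon>)) \<and>
     (\<exists>\<delta>0>0. \<forall>\<eta>>0. \<exists>N::int. \<forall>n0\<ge>0. \<forall>\<zeta>. diff_sol a r h n0 \<zeta> \<and> (\<forall>j\<in>{n0 - int k..n0}. \<bar>\<zeta> j\<bar> < \<delta>0)
        \<longrightarrow> (\<forall>n\<ge>n0 + N. \<bar>\<zeta> n\<bar> < \<eta>))"

end

theory Submission
  imports Defs
begin

declare zeta.simps[simp del]

lemma dde_sol_scale:
  assumes "dde_sol a r q \<sigma> x"
  shows "dde_sol a r q \<sigma> (\<lambda>t. c * x t)"
  unfolding dde_sol_def
proof (intro conjI allI impI)
  show "continuous_on {\<sigma> - q..} (\<lambda>t. c * x t)"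
    using assms unfolding dde_sol_def by (intro continuous_intros) auto
  fix t assume t: "t \<ge> \<sigma>"
  have "(x has_real_derivative (- a t * x (t - r t))) (at t within {\<sigma>..})"
    using assms t unfolding dde_sol_def by auto
  from DERIV_cmult[OF this, of c]
  show "((\<lambda>t. c * x t) has_real_derivative (- a t * (c * x (t - r t)))) (at t within {\<sigma>..})"
    by (simp add: algebra_simps)
qed

lemma uas_bound:
  assumes "dde_UAS a r q"
  shows "\<exists>C\<ge>1. \<forall>\<sigma> x B. \<sigma> \<ge> 0 \<longrightarrow> dde_sol a r q \<sigma> x \<longrightarrow> B > 0 \<longrightarrow>
           (\<forall>\<theta>\<in>{\<sigma>-q..\<sigma>}. \<bar>x \<theta>\<bar> \<le> B) \<longrightarrow> (\<forall>t\<ge>\<sigma>. \<bar>x t\<bar> \<le> C * B)"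
proof -
  obtain \<delta> where \<delta>: "\<delta> > 0" and st: "\<forall>\<sigma>\<ge>0. \<forall>x. dde_sol a r q \<sigma> x \<and> (\<forall>\<theta>\<in>{\<sigma> - q..\<sigma>}. \<bar>x \<theta>\<bar> < \<delta>)
        \<longrightarrow> (\<forall>t\<ge>\<sigma>. \<bar>x t\<bar> < 1)"
    using assms unfolding dde_UAS_def by (meson zero_less_one)
  show ?thesis
  proof (intro exI[of _ "max 1 (2/\<delta>)"] conjI allI impI)
    fix \<sigma> x B t assume \<sigma>: "\<sigma> \<ge> 0" and sol: "dde_sol a r q \<sigma> x" and B: "B > 0"
      and w: "\<forall>\<theta>\<in>{\<sigma>-q..\<sigma>}. \<bar>x \<theta>\<bar> \<le> B" and t: "t \<ge> \<sigma>"
    define c where "c = \<delta> / (2*B)"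
    have c: "c > 0" using \<delta> B c_def by simp
    have "\<forall>\<theta>\<in>{\<sigma> - q..\<sigma>}. \<bar>c * x \<theta>\<bar> < \<delta>"
    proof
      fix \<theta> assume "\<theta> \<in> {\<sigma> - q..\<sigma>}"
      then have "\<bar>c * x \<theta>\<bar> \<le> c * B" using w c by (simp add: abs_mult mult_left_mono)
      also have "c * B = \<delta>/2" using B c_def by simp
      finally show "\<bar>c * x \<theta>\<bar> < \<delta>" using \<delta> by simp
    qed
    then have "\<bar>c * x t\<bar> < 1" using st \<sigma> dde_sol_scale[OF sol, of c] t by blast
    then have "\<bar>x t\<bar> < 1 / c" using c by (simp add: abs_mult field_simps)
    also have "1 / c = (2/\<delta>) * B" using B \<delta> c_def by simp
    also have "\<dots> \<le> max 1 (2/\<delta>) * B" using B by (intro mult_right_mono) auto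
    finally show "\<bar>x t\<bar> \<le> max 1 (2/\<delta>) * B" by simp
  qed simp
qed

lemma uas_decay:
  assumes "dde_UAS a r q"
  shows "\<exists>T\<ge>0. \<forall>\<sigma> x B. \<sigma> \<ge> 0 \<longrightarrow> dde_sol a r q \<sigma> x \<longrightarrow> B > 0 \<longrightarrow>
           (\<forall>\<theta>\<in>{\<sigma>-q..\<sigma>}. \<bar>x \<theta>\<bar> \<le> B) \<longrightarrow> (\<forall>t\<ge>\<sigma>+T. \<bar>x t\<bar> \<le> B / 4)"
proof -
  obtain \<delta> where \<delta>: "\<delta> > 0" and at: "\<forall>\<eta>>0. \<exists>T. \<forall>\<sigma>\<ge>0. \<forall>x. dde_sol a r q \<sigma> x \<and> (\<forall>\<theta>\<in>{\<sigma> - q..\<sigma>}. \<bar>x \<theta>\<bar> < \<delta>)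
        \<longrightarrow> (\<forall>t\<ge>\<sigma> + T. \<bar>x t\<bar> < \<eta>)"
    using assms unfolding dde_UAS_def by blast
  obtain T where T: "\<forall>\<sigma>\<ge>0. \<forall>x. dde_sol a r q \<sigma> x \<and> (\<forall>\<theta>\<in>{\<sigma> - q..\<sigma>}. \<bar>x \<theta>\<bar> < \<delta>)
        \<longrightarrow> (\<forall>t\<ge>\<sigma> + T. \<bar>x t\<bar> < \<delta>/8)"
    using at \<delta> by (meson divide_pos_pos zero_less_numeral)
  show ?thesis
  proof (intro exI[of _ "max T 0"] conjI allI impI)
    fix \<sigma> x B t assume \<sigma>: "\<sigma> \<ge> 0" and sol: "dde_sol a r q \<sigma> x" and B: "B > 0"
      and w: "\<forall>\<theta>\<in>{\<sigma>-q..\<sigma>}. \<bar>x \<theta>\<bar> \<le> B" and t: "t \<ge> \<sigma> + max T 0"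
    define c where "c = \<delta> / (2*B)"
    have c: "c > 0" using \<delta> B c_def by simp
    have "\<forall>\<theta>\<in>{\<sigma> - q..\<sigma>}. \<bar>c * x \<theta>\<bar> < \<delta>"
    proof
      fix \<theta> assume "\<theta> \<in> {\<sigma> - q..\<sigma>}"
      then have "\<bar>c * x \<theta>\<bar> \<le> c * B" using w c by (simp add: abs_mult mult_left_mono)
      also have "c * B = \<delta>/2" using B c_def by simp
      finally show "\<bar>c * x \<theta>\<bar> < \<delta>" using \<delta> by simp
    qed
    moreover have "t \<ge> \<sigma> + T" using t by simp
    ultimately have "\<bar>c * x t\<bar> < \<delta>/8" using T \<sigma> dde_sol_scale[OF sol, of c] by blast
    then have "\<bar>x t\<bar> < (\<delta>/8) / c" using c by (simp add: abs_mult field_simps)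
    also have "(\<delta>/8) / c = B / 4" using B \<delta> c_def by simp
    finally show "\<bar>x t\<bar> \<le> B / 4" by simp
  qed simp
qed


definition pl :: "real \<Rightarrow> (int \<Rightarrow> real) \<Rightarrow> real \<Rightarrow> real" where
  "pl h \<zeta> t = (let i = \<lfloor>t / h\<rfloor> in \<zeta> i + (t / h - of_int i) * (\<zeta> (i+1) - \<zeta> i))"

lemma pl_piece:
  assumes h: "h > 0" and t: "of_int i * h \<le> t" "t \<le> of_int (i+1) * h"
  shows "pl h \<zeta> t = \<zeta> i + (t / h - of_int i) * (\<zeta> (i+1) - \<zeta> i)"
proof (cases "t = of_int (i+1) * h")
  case True
  then have "\<lfloor>t / h\<rfloor> = i + 1" using h by simp
  then show ?thesis unfolding pl_def Let_def using True h by simp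
next
  case False
  then have "t < of_int (i+1) * h" using t by simp
  then have "\<lfloor>t / h\<rfloor> = i" using t h by (simp add: floor_eq_iff field_simps)
  then show ?thesis unfolding pl_def Let_def by simp
qed

lemma pl_grid: "h > 0 \<Longrightarrow> pl h \<zeta> (of_int j * h) = \<zeta> j"
  using pl_piece[of h j "of_int j * h" \<zeta>] by simp

lemma piece_exists:
  fixes h t :: real
  assumes h: "h > 0" and m: "m1 < m2" and t: "of_int m1 * h \<le> t" "t \<le> of_int m2 * h"
  shows "\<exists>i. m1 \<le> i \<and> i < m2 \<and> of_int i * h \<le> t \<and> t \<le> of_int (i+1) * h"
proof -
  define f where "f = \<lfloor>t / h\<rfloor>"
  have f1: "of_int f \<le> t / h" "t / h < of_int f + 1" unfolding f_def by linarith+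
  have f2: "of_int f * h \<le> t" "t < (of_int f + 1) * h" using f1 h by (simp_all add: field_simps)
  have "m1 \<le> f" using t h unfolding f_def by (simp add: le_floor_iff field_simps)
  show ?thesis
  proof (intro exI[of _ "min f (m2 - 1)"] conjI)
    show "m1 \<le> min f (m2 - 1)" using \<open>m1 \<le> f\<close> m by simp
    show "min f (m2 - 1) < m2" by simp
    have "of_int (min f (m2 - 1)) \<le> (of_int f :: real)" by simp
    then show "of_int (min f (m2 - 1)) * h \<le> t" using f2 h by (meson mult_right_mono less_imp_le order_trans)
    show "t \<le> of_int (min f (m2 - 1) + 1) * h"
    proof (cases "f \<le> m2 - 1")
      case True then show ?thesis using f2 by (simp add: min_def)
    next
      case False then show ?thesis using t by (simp add: min_def)
    qed
  qed
qed

lemma telescope: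
  assumes d: "\<And>j. m1 \<le> j \<Longrightarrow> j < m2 \<Longrightarrow> \<bar>\<zeta> (j+1) - \<zeta> j\<bar> \<le> c"
  shows "m1 \<le> i \<Longrightarrow> i + int n \<le> m2 \<Longrightarrow> \<bar>\<zeta> (i + int n) - \<zeta> i\<bar> \<le> c * real n"
proof (induction n)
  case 0 then show ?case by simp
next
  case (Suc n)
  have "\<bar>\<zeta> (i + int n + 1) - \<zeta> (i + int n)\<bar> \<le> c" using d[of "i + int n"] Suc.prems by simp
  moreover have "\<bar>\<zeta> (i + int n) - \<zeta> i\<bar> \<le> c * real n" using Suc by simp
  ultimately show ?case by (simp add: algebra_simps)
qed

lemma pl_bound:
  assumes h: "h > 0" and m: "m1 < m2" and t: "of_int m1 * h \<le> t" "t \<le> of_int m2 * h"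
    and S: "\<And>j. m1 \<le> j \<Longrightarrow> j \<le> m2 \<Longrightarrow> \<bar>\<zeta> j\<bar> \<le> S"
  shows "\<bar>pl h \<zeta> t\<bar> \<le> S"
proof -
  obtain i where i: "m1 \<le> i" "i < m2" "of_int i * h \<le> t" "t \<le> of_int (i+1) * h"
    using piece_exists[OF h m t] by blast
  define \<theta> where "\<theta> = t / h - of_int i"
  have \<theta>: "0 \<le> \<theta>" "\<theta> \<le> 1" using i h unfolding \<theta>_def by (simp_all add: field_simps)
  have "pl h \<zeta> t = (1 - \<theta>) * \<zeta> i + \<theta> * \<zeta> (i+1)"
    using pl_piece[OF h i(3,4)] unfolding \<theta>_def by (simp add: algebra_simps)
  also have "\<bar>\<dots>\<bar> \<le> (1 - \<theta>) * S + \<theta> * S"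
  proof -
    have "\<bar>(1 - \<theta>) * \<zeta> i\<bar> \<le> (1 - \<theta>) * S" using S[of i] i \<theta> by (simp add: abs_mult mult_left_mono)
    moreover have "\<bar>\<theta> * \<zeta> (i+1)\<bar> \<le> \<theta> * S" using S[of "i+1"] i \<theta> by (simp add: abs_mult mult_left_mono)
    ultimately show ?thesis by linarith
  qed
  finally show ?thesis by (simp add: algebra_simps)
qed

lemma pl_lip_le:
  assumes h: "h > 0" and m: "m1 < m2" and \<Lambda>: "\<Lambda> \<ge> 0"
    and d: "\<And>j. m1 \<le> j \<Longrightarrow> j < m2 \<Longrightarrow> \<bar>\<zeta> (j+1) - \<zeta> j\<bar> \<le> \<Lambda> * h"
    and u: "of_int m1 * h \<le> u" and uv: "u \<le> v" and v: "v \<le> of_int m2 * h"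
  shows "\<bar>pl h \<zeta> v - pl h \<zeta> u\<bar> \<le> \<Lambda> * (v - u)"
proof -
  obtain i where i: "m1 \<le> i" "i < m2" "of_int i * h \<le> u" "u \<le> of_int (i+1) * h"
    using piece_exists[OF h m u] uv v by fastforce
  obtain j where j: "m1 \<le> j" "j < m2" "of_int j * h \<le> v" "v \<le> of_int (j+1) * h"
    using piece_exists[OF h m _ v] u uv by fastforce
  have pu: "pl h \<zeta> u = \<zeta> i + (u / h - of_int i) * (\<zeta> (i+1) - \<zeta> i)" by (rule pl_piece[OF h i(3,4)])
  have pv: "pl h \<zeta> v = \<zeta> j + (v / h - of_int j) * (\<zeta> (j+1) - \<zeta> j)" by (rule pl_piece[OF h j(3,4)])
  have di: "\<bar>\<zeta> (i+1) - \<zeta> i\<bar> \<le> \<Lambda> * h" using d i by simp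
  have dj: "\<bar>\<zeta> (j+1) - \<zeta> j\<bar> \<le> \<Lambda> * h" using d j by simp
  consider "j = i" | "j < i" | "i < j" by linarith
  then show ?thesis
  proof cases
    case 1
    have "pl h \<zeta> v - pl h \<zeta> u = ((v - u) / h) * (\<zeta> (i+1) - \<zeta> i)"
      using pu pv 1 h by (simp add: field_simps)
    also have "\<bar>\<dots>\<bar> \<le> ((v - u) / h) * (\<Lambda> * h)"
    proof -
      have nn: "0 \<le> (v - u) / h" using uv h by simp
      show ?thesis unfolding abs_mult abs_of_nonneg[OF nn] by (rule mult_left_mono[OF di nn])
    qed
    also have "\<dots> = \<Lambda> * (v - u)" using h by simp
    finally show ?thesis .
  next
    case 2
    then have "of_int (j+1) \<le> (of_int i :: real)" by simp
    then have "v \<le> u" using j(4) i(3) h by (meson mult_right_mono less_imp_le order_trans)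
    then have "u = v" using uv by simp
    then show ?thesis by simp
  next
    case 3
    have A: "\<bar>\<zeta> (i+1) - pl h \<zeta> u\<bar> \<le> \<Lambda> * (of_int (i+1) * h - u)"
    proof -
      have "\<zeta> (i+1) - pl h \<zeta> u = (of_int (i+1) - u / h) * (\<zeta> (i+1) - \<zeta> i)"
        using pu by (simp add: algebra_simps)
      also have "\<bar>\<dots>\<bar> \<le> (of_int (i+1) - u / h) * (\<Lambda> * h)"
      proof -
        have nn: "0 \<le> of_int (i+1) - u / h" using i(4) h by (simp add: field_simps)
        show ?thesis unfolding abs_mult abs_of_nonneg[OF nn] by (rule mult_left_mono[OF di nn])
      qed
      also have "\<dots> = \<Lambda> * (of_int (i+1) * h - u)" using h by (simp add: field_simps)
      finally show ?thesis .
    qed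
    have B: "\<bar>pl h \<zeta> v - \<zeta> j\<bar> \<le> \<Lambda> * (v - of_int j * h)"
    proof -
      have "pl h \<zeta> v - \<zeta> j = (v / h - of_int j) * (\<zeta> (j+1) - \<zeta> j)"
        using pv by (simp add: algebra_simps)
      also have "\<bar>\<dots>\<bar> \<le> (v / h - of_int j) * (\<Lambda> * h)"
      proof -
        have nn: "0 \<le> v / h - of_int j" using j(3) h by (simp add: field_simps)
        show ?thesis unfolding abs_mult abs_of_nonneg[OF nn] by (rule mult_left_mono[OF dj nn])
      qed
      also have "\<dots> = \<Lambda> * (v - of_int j * h)" using h by (simp add: field_simps)
      finally show ?thesis .
    qed
    have C: "\<bar>\<zeta> j - \<zeta> (i+1)\<bar> \<le> \<Lambda> * h * real (nat (j - (i+1)))"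
      using telescope[of m1 m2 \<zeta> "\<Lambda> * h" "i+1" "nat (j - (i+1))"] d 3 i j by simp
    have "real (nat (j - (i+1))) = of_int j - of_int i - 1" using 3 by simp
    then have C': "\<bar>\<zeta> j - \<zeta> (i+1)\<bar> \<le> \<Lambda> * (of_int j * h - of_int (i+1) * h)"
      using C by (simp add: algebra_simps)
    have "\<bar>pl h \<zeta> v - pl h \<zeta> u\<bar> \<le> \<bar>pl h \<zeta> v - \<zeta> j\<bar> + \<bar>\<zeta> j - \<zeta> (i+1)\<bar> + \<bar>\<zeta> (i+1) - pl h \<zeta> u\<bar>"
      by linarith
    also have "\<dots> \<le> \<Lambda> * (v - of_int j * h) + \<Lambda> * (of_int j * h - of_int (i+1) * h) + \<Lambda> * (of_int (i+1) * h - u)"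
      using A B C' by linarith
    also have "\<dots> = \<Lambda> * (v - u)" by (simp add: algebra_simps)
    finally show ?thesis .
  qed
qed


lemma pl_lip:
  assumes h: "h > 0" and m: "m1 < m2" and \<Lambda>: "\<Lambda> \<ge> 0"
    and d: "\<And>j. m1 \<le> j \<Longrightarrow> j < m2 \<Longrightarrow> \<bar>\<zeta> (j+1) - \<zeta> j\<bar> \<le> \<Lambda> * h"
    and u: "u \<in> {of_int m1 * h .. of_int m2 * h}" and v: "v \<in> {of_int m1 * h .. of_int m2 * h}"
  shows "\<bar>pl h \<zeta> v - pl h \<zeta> u\<bar> \<le> \<Lambda> * \<bar>v - u\<bar>"
proof (cases "u \<le> v")
  case True
  then show ?thesis using pl_lip_le[where \<zeta>=\<zeta>, OF h m \<Lambda> d, of u v] u v by simp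
next
  case False
  then show ?thesis using pl_lip_le[where \<zeta>=\<zeta>, OF h m \<Lambda> d, of v u] u v by (simp add: abs_minus_commute)
qed

lemma pl_cont:
  assumes h: "h > 0" and m: "m1 < m2" and \<Lambda>: "\<Lambda> \<ge> 0"
    and d: "\<And>j. m1 \<le> j \<Longrightarrow> j < m2 \<Longrightarrow> \<bar>\<zeta> (j+1) - \<zeta> j\<bar> \<le> \<Lambda> * h"
  shows "continuous_on {of_int m1 * h .. of_int m2 * h} (pl h \<zeta>)"
proof (rule lipschitz_on_continuous_on)
  show "\<Lambda>-lipschitz_on {of_int m1 * h .. of_int m2 * h} (pl h \<zeta>)"
  proof (rule lipschitz_onI[OF _ \<Lambda>])
    fix u v assume "u \<in> {of_int m1 * h .. of_int m2 * h}" "v \<in> {of_int m1 * h .. of_int m2 * h}"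
    then show "dist (pl h \<zeta> u) (pl h \<zeta> v) \<le> \<Lambda> * dist u v"
      using pl_lip[where \<zeta>=\<zeta>, OF h m \<Lambda> d] by (simp add: dist_real_def)
  qed
qed

locale dd =
  fixes a r :: "real \<Rightarrow> real" and q M :: real
  assumes q_pos: "q > 0" and a_cont: "continuous_on {0..} a"
    and a_nonneg: "\<And>t. t \<ge> 0 \<Longrightarrow> a t \<ge> 0"
    and r_nonneg: "\<And>t. t \<ge> 0 \<Longrightarrow> 0 \<le> r t"
    and r_le: "\<And>t. t \<ge> 0 \<Longrightarrow> r t \<le> q"
    and a_le: "\<And>t. t \<ge> 0 \<Longrightarrow> a t \<le> M"
    and r_uc: "uniformly_continuous_on {0..} r"
begin

lemma M_nonneg: "0 \<le> M"
  using a_nonneg[of 0] a_le[of 0] by simp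

lemma r_cont: "continuous_on {0..} r"
  using r_uc uniformly_continuous_imp_continuous by blast

lemma kn_props:
  assumes h: "h > 0" and kh: "real k * h = q" and n: "n \<ge> 0"
  shows "kn r h n \<le> k" "real (kn r h n) * h \<le> r (of_int n * h)"
        "r (of_int n * h) < (real (kn r h n) + 1) * h"
proof -
  have t: "of_int n * h \<ge> 0" using n h by simp
  define f where "f = \<lfloor>r (of_int n * h) / h\<rfloor>"
  have f0: "f \<ge> 0" using r_nonneg[OF t] h by (simp add: f_def)
  have kn: "real (kn r h n) = of_int f" using f0 by (simp add: kn_def f_def)
  have "of_int f \<le> r (of_int n * h) / h" unfolding f_def by (rule of_int_floor_le)
  then show "real (kn r h n) * h \<le> r (of_int n * h)" using h kn by (simp add: pos_le_divide_eq)
  have "r (of_int n * h) / h < of_int f + 1" unfolding f_def by (rule real_of_int_floor_add_one_gt)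
  then show "r (of_int n * h) < (real (kn r h n) + 1) * h" using h kn by (simp add: pos_divide_less_eq)
  have "r (of_int n * h) / h \<le> real k"
    using r_le[OF t] h kh by (simp add: pos_divide_le_eq)
  then have "of_int f \<le> real k" using \<open>of_int f \<le> r (of_int n * h) / h\<close> by linarith
  then have "real (kn r h n) \<le> real k" using kn by simp
  then show "kn r h n \<le> k" by simp
qed

lemma a_integrable:
  assumes "0 \<le> u" shows "a integrable_on {u..v}"
  by (rule integrable_continuous_real) (rule continuous_on_subset[OF a_cont], use assms in auto)

lemma dA_bounds:
  assumes h: "h > 0" and n: "n \<ge> 0"
  shows "0 \<le> dA a h n" "dA a h n \<le> M * h"
proof -
  have u: "0 \<le> of_int n * h" using n h by simp
  have le: "of_int n * h \<le> of_int (n+1) * h" using h by simp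
  have int: "(a has_integral dA a h n) {of_int n * h .. of_int (n + 1) * h}"
    unfolding dA_def using a_integrable[OF u] by (simp add: integrable_integral)
  show "0 \<le> dA a h n" unfolding dA_def
    by (rule integral_nonneg[OF a_integrable[OF u]]) (use u a_nonneg in auto)
  have "norm (dA a h n) \<le> M * h"
  proof -
    have bnd: "\<And>s. s \<in> {of_int n * h .. of_int (n + 1) * h} - {} \<Longrightarrow> norm (a s) \<le> M"
      using u a_nonneg a_le by (auto intro!: order.trans[OF _ u])
    show ?thesis
      using has_integral_bound_real[OF M_nonneg finite.emptyI int bnd] le
      by (auto simp: algebra_simps)
  qed
  then show "dA a h n \<le> M * h" by simp
qed

lemma sol_ftc:
  assumes sol: "dde_sol a r q \<sigma> x" and uv: "\<sigma> \<le> u" "u \<le> v"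
  shows "((\<lambda>s. a s * x (s - r s)) has_integral (x u - x v)) {u..v}"
proof -
  have "((\<lambda>s. - (a s * x (s - r s))) has_integral (x v - x u)) {u..v}"
  proof (rule fundamental_theorem_of_calculus[OF uv(2)])
    fix s assume s: "s \<in> {u..v}"
    have "(x has_real_derivative (- a s * x (s - r s))) (at s within {\<sigma>..})"
      using sol s uv unfolding dde_sol_def by auto
    then have "(x has_real_derivative (- a s * x (s - r s))) (at s within {u..v})"
      by (rule has_field_derivative_subset) (use uv in auto)
    then show "(x has_vector_derivative - (a s * x (s - r s))) (at s within {u..v})"
      by (simp add: has_real_derivative_iff_has_vector_derivative)
  qed
  from has_integral_neg[OF this] show ?thesis by simp
qed

lemma err_bound:
  assumes h: "h > 0" and kh: "real k * h = q" and m0: "m0 \<ge> 0"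
   and sol: "dde_sol a r q (of_int m0 * h) x"
   and rec: "\<And>n. n \<ge> m0 \<Longrightarrow> \<zeta> (n+1) = \<zeta> n - dA a h n * \<zeta> (n - int (kn r h n))"
   and init: "\<And>j. m0 - int k \<le> j \<Longrightarrow> j \<le> m0 \<Longrightarrow> x (of_int j * h) = \<zeta> j"
   and md: "\<And>n s. m0 \<le> n \<Longrightarrow> n < m0 + int N \<Longrightarrow> of_int n * h \<le> s \<Longrightarrow> s \<le> of_int (n+1) * h
              \<Longrightarrow> \<bar>x (s - r s) - x (of_int (n - int (kn r h n)) * h)\<bar> \<le> \<rho>"
   and \<rho>: "\<rho> \<ge> 0"
  shows "j \<le> N \<Longrightarrow> m0 - int k \<le> i \<Longrightarrow> i \<le> m0 + int j
          \<Longrightarrow> \<bar>x (of_int i * h) - \<zeta> i\<bar> \<le> \<rho> * ((1 + M*h)^j - 1)"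
proof (induction j arbitrary: i)
  case 0
  then show ?case using init[of i] by simp
next
  case (Suc j)
  have Mh: "0 \<le> M * h" using M_nonneg h by simp
  have pmono: "(1 + M*h)^j \<le> (1 + M*h)^Suc j"
    using Mh by (simp add: power_increasing)
  have pge: "1 \<le> (1 + M*h)^j" using Mh by simp
  show ?case
  proof (cases "i \<le> m0 + int j")
    case True
    have "\<bar>x (of_int i * h) - \<zeta> i\<bar> \<le> \<rho> * ((1 + M*h)^j - 1)"
      using Suc True by auto
    also have "\<dots> \<le> \<rho> * ((1 + M*h)^Suc j - 1)"
      using pmono \<rho> by (intro mult_left_mono) auto
    finally show ?thesis .
  next
    case False
    define n where "n = m0 + int j"
    have i: "i = n + 1" using False Suc.prems n_def by simp
    have n0: "n \<ge> 0" "n \<ge> m0" using m0 n_def by auto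
    define D where "D = \<rho> * ((1 + M*h)^j - 1)"
    have IH: "\<And>i'. m0 - int k \<le> i' \<Longrightarrow> i' \<le> n \<Longrightarrow> \<bar>x (of_int i' * h) - \<zeta> i'\<bar> \<le> D"
      using Suc.IH Suc.prems n_def D_def by auto
    have D0: "D \<ge> 0" using \<rho> pge D_def by simp
    define c where "c = x (of_int (n - int (kn r h n)) * h)"
    define dd where "dd = dA a h n"
    have knk: "kn r h n \<le> k" using kn_props(1)[OF h kh n0(1)] .
    have le1: "of_int m0 * h \<le> of_int n * h" using n0 h by simp
    have le2: "of_int n * h \<le> of_int (n+1) * h" using h by simp
    have ftc: "((\<lambda>s. a s * x (s - r s)) has_integral (x (of_int n * h) - x (of_int (n+1) * h)))
                 {of_int n * h .. of_int (n+1) * h}"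
      by (rule sol_ftc[OF sol le1 le2])
    have u0: "0 \<le> of_int n * h" using n0 h by simp
    have aint: "(a has_integral dd) {of_int n * h .. of_int (n+1) * h}"
      unfolding dd_def dA_def using a_integrable[OF u0] by (simp add: integrable_integral)
    have I: "((\<lambda>s. a s * x (s - r s) - c * a s) has_integral
               (x (of_int n * h) - x (of_int (n+1) * h) - c * dd)) {of_int n * h .. of_int (n+1) * h}"
      by (rule has_integral_diff[OF ftc has_integral_mult_right[OF aint]])
    have bnd: "\<And>s. s \<in> {of_int n * h .. of_int (n+1) * h} - {} \<Longrightarrow>
                 norm (a s * x (s - r s) - c * a s) \<le> M * \<rho>"
    proof -
      fix s assume s: "s \<in> {of_int n * h .. of_int (n+1) * h} - {}"
      have s0: "s \<ge> 0" using s u0 by auto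
      have "norm (a s * x (s - r s) - c * a s) = a s * \<bar>x (s - r s) - c\<bar>"
        using a_nonneg[OF s0] proof -
        have "a s * x (s - r s) - c * a s = a s * (x (s - r s) - c)" by (simp add: algebra_simps)
        then show ?thesis using a_nonneg[OF s0] by (simp add: abs_mult)
      qed
      also have "\<dots> \<le> M * \<rho>"
        using md[of n s] s n0 n_def Suc.prems(1) a_nonneg[OF s0] a_le[OF s0] \<rho> unfolding c_def
        by (intro mult_mono) auto
      finally show "norm (a s * x (s - r s) - c * a s) \<le> M * \<rho>" .
    qed
    have Ib: "\<bar>x (of_int n * h) - x (of_int (n+1) * h) - c * dd\<bar> \<le> M * \<rho> * h"
      using has_integral_bound_real[OF mult_nonneg_nonneg[OF M_nonneg \<rho>] finite.emptyI I bnd] le2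
      by (simp add: algebra_simps)
    have dd: "0 \<le> dd" "dd \<le> M * h" using dA_bounds[OF h n0(1)] dd_def by auto
    have E1: "\<bar>x (of_int n * h) - \<zeta> n\<bar> \<le> D" using IH[of n] n0 by simp
    have E2: "\<bar>c - \<zeta> (n - int (kn r h n))\<bar> \<le> D"
      using IH[of "n - int (kn r h n)"] knk n0 unfolding c_def by simp
    have eq: "x (of_int i * h) - \<zeta> i = (x (of_int n * h) - \<zeta> n)
               - (x (of_int n * h) - x (of_int (n+1) * h) - c * dd) - dd * (c - \<zeta> (n - int (kn r h n)))"
      using rec[OF n0(2)] i unfolding dd_def by (simp add: algebra_simps)
    have "\<bar>dd * (c - \<zeta> (n - int (kn r h n)))\<bar> \<le> M * h * D"
      using dd E2 by (simp add: abs_mult mult_mono)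
    then have "\<bar>x (of_int i * h) - \<zeta> i\<bar> \<le> D + M * \<rho> * h + M * h * D"
      using eq E1 Ib by linarith
    also have "\<dots> = \<rho> * ((1 + M*h)^Suc j - 1)"
      unfolding D_def by (simp add: algebra_simps)
    finally show ?thesis .
  qed
qed

lemma delay_cont:
  assumes \<sigma>: "\<sigma> \<ge> 0" and w: "continuous_on {\<sigma> - q..} w"
  shows "continuous_on {\<sigma>..} (\<lambda>s. w (s - r s))"
proof (rule continuous_on_compose2[OF w])
  show "continuous_on {\<sigma>..} (\<lambda>s. s - r s)"
    by (intro continuous_intros continuous_on_subset[OF r_cont]) (use \<sigma> in auto)
  show "(\<lambda>s. s - r s) ` {\<sigma>..} \<subseteq> {\<sigma> - q..}"
  proof
    fix y assume "y \<in> (\<lambda>s. s - r s) ` {\<sigma>..}"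
    then obtain s where s: "s \<ge> \<sigma>" "y = s - r s" by auto
    then show "y \<in> {\<sigma> - q..}" using r_le[of s] \<sigma> by auto
  qed
qed

lemma a_cont_sub: "\<sigma> \<ge> 0 \<Longrightarrow> continuous_on {\<sigma>..} a"
  by (rule continuous_on_subset[OF a_cont]) auto

lemma r_cont_sub: "\<sigma> \<ge> 0 \<Longrightarrow> continuous_on {\<sigma>..} r"
  by (rule continuous_on_subset[OF r_cont]) auto

lemma exp_integral:
  fixes L u v :: real
  assumes L: "L > 0" and uv: "u \<le> v"
  shows "((\<lambda>s. exp (L * s)) has_integral ((exp (L * v) - exp (L * u)) / L)) {u..v}"
proof -
  have "((\<lambda>s. exp (L * s)) has_integral (exp (L * v) / L - exp (L * u) / L)) {u..v}"
  proof (rule fundamental_theorem_of_calculus[OF uv])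
    fix s assume "s \<in> {u..v}"
    have "((\<lambda>s. exp (L * s) / L) has_real_derivative exp (L * s)) (at s within {u..v})"
      using L by (auto intro!: derivative_eq_intros)
    then show "((\<lambda>s. exp (L * s) / L) has_vector_derivative exp (L * s)) (at s within {u..v})"
      by (simp add: has_real_derivative_iff_has_vector_derivative)
  qed
  then show ?thesis by (simp add: diff_divide_distrib)
qed

lemma int_est:
  assumes \<sigma>: "\<sigma> \<ge> 0" and L: "L > 0" and v: "v \<ge> \<sigma>"
    and w: "continuous_on {\<sigma> - q..} w" and wb: "\<And>t. t \<ge> \<sigma> - q \<Longrightarrow> \<bar>w t\<bar> \<le> B"
  shows "(\<lambda>s. a s * exp (L * (s - r s)) * w (s - r s)) integrable_on {\<sigma>..v}"
    and "\<bar>integral {\<sigma>..v} (\<lambda>s. a s * exp (L * (s - r s)) * w (s - r s))\<bar> \<le> M * B * exp (L * v) / L"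
proof -
  have B0: "B \<ge> 0" using wb[of \<sigma>] q_pos by auto
  have c: "continuous_on {\<sigma>..} (\<lambda>s. a s * exp (L * (s - r s)) * w (s - r s))"
    by (intro continuous_intros a_cont_sub r_cont_sub delay_cont w \<sigma>)
  show int: "(\<lambda>s. a s * exp (L * (s - r s)) * w (s - r s)) integrable_on {\<sigma>..v}"
    by (rule integrable_continuous_real, rule continuous_on_subset[OF c]) auto
  have ei: "((\<lambda>s. M * B * exp (L * s)) has_integral M * B * ((exp (L * v) - exp (L * \<sigma>)) / L)) {\<sigma>..v}"
    by (rule has_integral_mult_right[OF exp_integral[OF L v]])
  have "norm (integral {\<sigma>..v} (\<lambda>s. a s * exp (L * (s - r s)) * w (s - r s)))
         \<le> integral {\<sigma>..v} (\<lambda>s. M * B * exp (L * s))"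
  proof (rule integral_norm_bound_integral[OF int])
    show "(\<lambda>s. M * B * exp (L * s)) integrable_on {\<sigma>..v}" using ei by blast
    fix s assume s: "s \<in> {\<sigma>..v}"
    then have s0: "s \<ge> 0" using \<sigma> by auto
    have e: "exp (L * (s - r s)) \<le> exp (L * s)" using r_nonneg[OF s0] L by (simp add: mult_left_mono)
    have wb': "\<bar>w (s - r s)\<bar> \<le> B" using wb r_le[OF s0] s by auto
    have "norm (a s * exp (L * (s - r s)) * w (s - r s)) = a s * exp (L * (s - r s)) * \<bar>w (s - r s)\<bar>"
      using a_nonneg[OF s0] by (simp add: abs_mult)
    also have "\<dots> \<le> M * exp (L * s) * B"
      using a_nonneg[OF s0] a_le[OF s0] e wb' M_nonneg
      by (intro mult_mono) auto
    finally show "norm (a s * exp (L * (s - r s)) * w (s - r s)) \<le> M * B * exp (L * s)"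
      by (simp add: algebra_simps)
  qed
  also have "\<dots> = M * B * ((exp (L * v) - exp (L * \<sigma>)) / L)" using ei by (rule integral_unique)
  also have "\<dots> \<le> M * B * (exp (L * v) / L)"
    using M_nonneg B0 L by (intro mult_left_mono) (auto simp: divide_right_mono)
  finally show "\<bar>integral {\<sigma>..v} (\<lambda>s. a s * exp (L * (s - r s)) * w (s - r s))\<bar> \<le> M * B * exp (L * v) / L"
    by simp
qed

lemma exist_sol:
  assumes \<sigma>: "\<sigma> \<ge> 0" and \<psi>: "continuous_on {\<sigma> - q..\<sigma>} \<psi>"
  shows "\<exists>x. dde_sol a r q \<sigma> x \<and> (\<forall>\<theta>\<in>{\<sigma> - q..\<sigma>}. x \<theta> = \<psi> \<theta>)"
proof -
  define L :: real where "L = 2*M + 1"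
  have L: "L > 0" using M_nonneg L_def by simp
  define G where "G = (\<lambda>(w::real\<Rightarrow>real) s. a s * exp (L * (s - r s)) * w (s - r s))"
  define J where "J = (\<lambda>w v. integral {\<sigma>..v} (G w))"
  define U where "U = (\<lambda>t::real. max t (\<sigma> - q))"
  define Fm where "Fm = (\<lambda>(y::real \<Rightarrow>\<^sub>C real) t. exp (- L * U t) *
        (\<psi> (min (U t) \<sigma>) - J (apply_bcontfun y) (max (U t) \<sigma>)))"
  have U: "\<And>t. U t \<ge> \<sigma> - q" unfolding U_def by simp
  obtain B\<psi> where B\<psi>: "\<And>\<theta>. \<theta> \<in> {\<sigma>-q..\<sigma>} \<Longrightarrow> \<bar>\<psi> \<theta>\<bar> \<le> B\<psi>"
    using compact_imp_bounded[OF compact_continuous_image[OF \<psi> compact_Icc]]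
    unfolding bounded_iff by (auto simp del: atLeastAtMost_iff)
  have ycont: "\<And>(y::real \<Rightarrow>\<^sub>C real) S. continuous_on S (apply_bcontfun y)" by simp
  have ybnd: "\<And>(y::real \<Rightarrow>\<^sub>C real) t. \<bar>apply_bcontfun y t\<bar> \<le> norm y"
    using norm_bounded by (metis real_norm_def)
  have Jint: "\<And>w v. continuous_on {\<sigma> - q..} w \<Longrightarrow> v \<ge> \<sigma> \<Longrightarrow> G w integrable_on {\<sigma>..v}"
  proof -
    fix w v assume w: "continuous_on {\<sigma> - q..} (w::real\<Rightarrow>real)" and v: "v \<ge> \<sigma>"
    have c: "continuous_on {\<sigma>..} (G w)" unfolding G_def
      by (intro continuous_intros a_cont_sub r_cont_sub delay_cont w \<sigma>)
    show "G w integrable_on {\<sigma>..v}"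
      by (rule integrable_continuous_real, rule continuous_on_subset[OF c]) auto
  qed
  have J0: "\<And>w. J w \<sigma> = 0" unfolding J_def by simp
  have Jbound: "\<bar>exp (- L * u) * J w (max u \<sigma>)\<bar> \<le> M * B / L"
    if w: "continuous_on {\<sigma> - q..} w" and wb: "\<And>t. t \<ge> \<sigma> - q \<Longrightarrow> \<bar>w t\<bar> \<le> B" for u w B
  proof (cases "u \<le> \<sigma>")
    case True
    have B0: "B \<ge> 0" using wb[of \<sigma>] q_pos by auto
    then show ?thesis using True J0 M_nonneg L by (simp add: max_def)
  next
    case False
    then have uv: "max u \<sigma> = u" "u \<ge> \<sigma>" by auto
    have "\<bar>J w u\<bar> \<le> M * B * exp (L * u) / L"
      unfolding J_def G_def by (rule int_est(2)[OF \<sigma> L uv(2) w wb])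
    then have "\<bar>exp (- L * u) * J w u\<bar> \<le> exp (- L * u) * (M * B * exp (L * u) / L)"
    proof -
      have e0: "0 \<le> exp (- L * u)" by simp
      show ?thesis unfolding abs_mult abs_of_nonneg[OF e0]
        by (rule mult_left_mono[OF \<open>\<bar>J w u\<bar> \<le> M * B * exp (L * u) / L\<close> e0])
    qed
    also have "\<dots> = M * B / L" by (simp add: exp_minus field_simps)
    finally show ?thesis using uv by simp
  qed
  have Fm_in: "Fm y \<in> bcontfun" for y
  proof -
    have yc: "continuous_on {\<sigma> - q..} (apply_bcontfun y)" by simp
    have Jc: "continuous_on {\<sigma>..b} (J (apply_bcontfun y))" if "b \<ge> \<sigma>" for b
      unfolding J_def by (rule indefinite_integral_continuous_1, rule Jint[OF yc that])
    have "continuous_on (\<Union>b\<in>{\<sigma><..}. {..<b}) (Fm y)"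
    proof (rule continuous_on_open_UN)
      fix b assume b: "b \<in> {\<sigma><..}"
      have c1: "continuous_on {..<b} (\<lambda>t. \<psi> (min (U t) \<sigma>))"
      proof (rule continuous_on_compose2[OF \<psi>])
        show "continuous_on {..<b} (\<lambda>t. min (U t) \<sigma>)" unfolding U_def by (intro continuous_intros)
        show "(\<lambda>t. min (U t) \<sigma>) ` {..<b} \<subseteq> {\<sigma> - q..\<sigma>}" using U q_pos by (auto simp: min_def)
      qed
      have c2: "continuous_on {..<b} (\<lambda>t. J (apply_bcontfun y) (max (U t) \<sigma>))"
      proof (rule continuous_on_compose2[OF Jc[of b]])
        show "b \<ge> \<sigma>" using b by simp
        show "continuous_on {..<b} (\<lambda>t. max (U t) \<sigma>)" unfolding U_def by (intro continuous_intros)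
        show "(\<lambda>t. max (U t) \<sigma>) ` {..<b} \<subseteq> {\<sigma>..b}" using b q_pos by (auto simp: U_def)
      qed
      show "continuous_on {..<b} (Fm y)" unfolding Fm_def
        by (intro continuous_intros c1 c2) (auto simp: U_def intro!: continuous_intros)
    qed auto
    moreover have "UNIV \<subseteq> (\<Union>b\<in>{\<sigma><..}. {..<b})"
    proof
      fix t :: real
      show "t \<in> (\<Union>b\<in>{\<sigma><..}. {..<b})" by (rule UN_I[of "max t \<sigma> + 1"]) auto
    qed
    ultimately have cont: "continuous_on UNIV (Fm y)" by (rule continuous_on_subset)
    have bnd: "\<bar>Fm y t\<bar> \<le> exp (- L * (\<sigma> - q)) * B\<psi> + M * norm y / L" for t
    proof -
      have e: "exp (- L * U t) \<le> exp (- L * (\<sigma> - q))" using U[of t] L by simp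
      have p: "\<bar>\<psi> (min (U t) \<sigma>)\<bar> \<le> B\<psi>" using B\<psi> U[of t] q_pos by (auto simp: min_def)
      have "\<bar>exp (- L * U t) * \<psi> (min (U t) \<sigma>)\<bar> \<le> exp (- L * (\<sigma> - q)) * B\<psi>"
        using e p by (simp add: abs_mult mult_mono)
      moreover have "\<bar>exp (- L * U t) * J (apply_bcontfun y) (max (U t) \<sigma>)\<bar> \<le> M * norm y / L"
        by (rule Jbound[OF yc]) (rule ybnd)
      ultimately show ?thesis unfolding Fm_def by (simp add: right_diff_distrib abs_triangle_ineq4 order_trans[OF abs_triangle_ineq4])
    qed
    have "bounded (range (Fm y))" by (rule boundedI[where B="exp (- L * (\<sigma> - q)) * B\<psi> + M * norm y / L"]) (use bnd in auto)
    then show ?thesis using cont unfolding bcontfun_def by simp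
  qed
  define \<Phi> where "\<Phi> = (\<lambda>y. Bcontfun (Fm y))"
  have \<Phi>: "\<And>y. apply_bcontfun (\<Phi> y) = Fm y" unfolding \<Phi>_def using Fm_in Bcontfun_inverse by blast
  have contr: "dist (\<Phi> y1) (\<Phi> y2) \<le> (M / L) * dist y1 y2" for y1 y2
  proof (rule dist_bound)
    fix t
    define w where "w = (\<lambda>z. apply_bcontfun y1 z - apply_bcontfun y2 z)"
    have wc: "continuous_on {\<sigma> - q..} w" unfolding w_def by (intro continuous_intros) auto
    have wb: "\<And>z. \<bar>w z\<bar> \<le> dist y1 y2" unfolding w_def using dist_bounded by (metis dist_real_def)
    have v: "max (U t) \<sigma> \<ge> \<sigma>" by simp
    have "J (apply_bcontfun y1) (max (U t) \<sigma>) - J (apply_bcontfun y2) (max (U t) \<sigma>) = J w (max (U t) \<sigma>)"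
      unfolding J_def
      by (subst integral_diff[symmetric], (rule Jint[OF _ v], simp)+) (simp add: G_def w_def algebra_simps)
    then have "Fm y1 t - Fm y2 t = - (exp (- L * U t) * J w (max (U t) \<sigma>))"
      unfolding Fm_def by (simp add: algebra_simps)
    moreover have "\<bar>exp (- L * U t) * J w (max (U t) \<sigma>)\<bar> \<le> M * dist y1 y2 / L"
      by (rule Jbound[OF wc wb])
    ultimately show "dist (\<Phi> y1 t) (\<Phi> y2 t) \<le> M / L * dist y1 y2"
      unfolding \<Phi> by (simp add: dist_real_def)
  qed
  have c1: "M / L < 1" using L M_nonneg L_def by simp
  have c0: "0 \<le> M / L" using L M_nonneg by simp
  obtain y where y: "\<Phi> y = y" using banach_fix_type[OF c0 c1] contr by blast
  have yF: "\<And>t. apply_bcontfun y t = Fm y t" using y \<Phi> by metis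
  define x where "x = (\<lambda>t. exp (L * t) * apply_bcontfun y t)"
  have ee: "\<And>t. exp (L * t) * exp (- L * t) = 1" by (simp flip: exp_add)
  have Gx: "G (apply_bcontfun y) = (\<lambda>s. a s * x (s - r s))"
    unfolding G_def x_def by (simp add: mult_ac)
  have xwin: "x \<theta> = \<psi> \<theta>" if "\<theta> \<in> {\<sigma>-q..\<sigma>}" for \<theta>
  proof -
    have "U \<theta> = \<theta>" "min \<theta> \<sigma> = \<theta>" "max \<theta> \<sigma> = \<sigma>" using that by (auto simp: U_def)
    then have "apply_bcontfun y \<theta> = exp (- L * \<theta>) * \<psi> \<theta>" using yF[of \<theta>] J0 unfolding Fm_def by simp
    then show ?thesis unfolding x_def using ee[of \<theta>] by (simp flip: mult.assoc)
  qed
  have xafter: "x t = \<psi> \<sigma> - integral {\<sigma>..t} (\<lambda>s. a s * x (s - r s))" if "t \<ge> \<sigma>" for t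
  proof -
    have "U t = t" "min t \<sigma> = \<sigma>" "max t \<sigma> = t" using that q_pos by (auto simp: U_def)
    then have "apply_bcontfun y t = exp (- L * t) * (\<psi> \<sigma> - J (apply_bcontfun y) t)"
      using yF[of t] unfolding Fm_def by simp
    then have "x t = \<psi> \<sigma> - J (apply_bcontfun y) t" unfolding x_def using ee[of t] by (simp flip: mult.assoc)
    then show ?thesis unfolding J_def Gx .
  qed
  have xc: "continuous_on UNIV x" unfolding x_def by (intro continuous_intros) auto
  then have xc': "continuous_on {\<sigma> - q..} x" by (rule continuous_on_subset) auto
  have Gc: "continuous_on {\<sigma>..} (\<lambda>s. a s * x (s - r s))"
    by (intro continuous_intros a_cont_sub delay_cont xc' \<sigma>)
  have "dde_sol a r q \<sigma> x"
    unfolding dde_sol_def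
  proof (intro conjI allI impI xc')
    fix t assume t: "t \<ge> \<sigma>"
    define H where "H = (\<lambda>v. \<psi> \<sigma> - integral {\<sigma>..v} (\<lambda>s. a s * x (s - r s)))"
    have "((\<lambda>v. integral {\<sigma>..v} (\<lambda>s. a s * x (s - r s))) has_real_derivative (a t * x (t - r t)))
            (at t within {\<sigma>..t+1})"
      by (rule integral_has_real_derivative) (use t in \<open>auto intro: continuous_on_subset[OF Gc]\<close>)
    then have "(H has_real_derivative (0 - a t * x (t - r t))) (at t within {\<sigma>..t+1})"
      unfolding H_def by (intro DERIV_diff DERIV_const)
    moreover have "at t within {\<sigma>..t+1} = at t within {\<sigma>..}"
      by (rule at_within_nhd[where S="{t - 1 <..< t + 1}"]) (use t in auto)
    ultimately have "(H has_real_derivative (- a t * x (t - r t))) (at t within {\<sigma>..})" by simp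
    then show "(x has_real_derivative (- a t * x (t - r t))) (at t within {\<sigma>..})"
      by (rule has_field_derivative_transform_within[where d=1]) (use t xafter H_def in auto)
  qed
  then show ?thesis using xwin by blast
qed

lemma sol_lip:
  assumes sol: "dde_sol a r q \<sigma> x" and \<sigma>: "\<sigma> \<ge> 0"
    and B: "\<And>t. t \<ge> \<sigma> - q \<Longrightarrow> \<bar>x t\<bar> \<le> B" and uv: "\<sigma> \<le> u" "u \<le> v"
  shows "\<bar>x v - x u\<bar> \<le> M * B * (v - u)"
proof -
  have B0: "B \<ge> 0" using B[of \<sigma>] q_pos by auto
  have bnd: "\<And>s. s \<in> {u..v} - {} \<Longrightarrow> norm (a s * x (s - r s)) \<le> M * B"
  proof -
    fix s assume s: "s \<in> {u..v} - {}"
    then have s0: "s \<ge> 0" using uv \<sigma> by auto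
    have "\<bar>x (s - r s)\<bar> \<le> B" using B r_le[OF s0] s uv by auto
    then show "norm (a s * x (s - r s)) \<le> M * B"
      using a_nonneg[OF s0] a_le[OF s0] B0 by (simp add: abs_mult mult_mono)
  qed
  have "norm (x u - x v) \<le> M * B * (v - u)"
    using has_integral_bound_real[OF mult_nonneg_nonneg[OF M_nonneg B0] finite.emptyI sol_ftc[OF sol uv] bnd] uv
    by simp
  then show ?thesis by (simp add: abs_minus_commute)
qed

lemma zeta_rec: "n \<ge> 0 \<Longrightarrow> zeta a r h \<phi> (n+1) = zeta a r h \<phi> n - dA a h n * zeta a r h \<phi> (n - int (kn r h n))"
  by (subst zeta.simps) simp

lemma zeta_init: "n \<le> 0 \<Longrightarrow> zeta a r h \<phi> n = \<phi> (of_int n * h)"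
  by (subst zeta.simps) simp

lemma part1:
  assumes sol: "dde_sol a r q 0 x" and x\<phi>: "\<forall>\<theta>\<in>{-q..0}. x \<theta> = \<phi> \<theta>" and t: "t > 0"
  shows "(\<lambda>k::nat. \<bar>x t - zh a r (q / real k) \<phi> (grid_floor (q / real k) t)\<bar>) \<longlonglongrightarrow> 0"
proof (rule LIMSEQ_I)
  fix \<epsilon> :: real assume \<epsilon>: "\<epsilon> > 0"
  define E where "E = exp (M * t)"
  have E: "E \<ge> 1" unfolding E_def using M_nonneg t by simp
  define \<epsilon>' where "\<epsilon>' = \<epsilon> / (2 * (E + 1))"
  have \<epsilon>': "\<epsilon>' > 0" using \<epsilon> E \<epsilon>'_def by simp
  have xc: "continuous_on {-q..t+q} x"
    using sol unfolding dde_sol_def by (auto intro: continuous_on_subset)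
  have "uniformly_continuous_on {-q..t+q} x"
    by (rule compact_uniformly_continuous[OF xc compact_Icc])
  then obtain d1 where d1: "d1 > 0" and d1x: "\<And>u v. u \<in> {-q..t+q} \<Longrightarrow> v \<in> {-q..t+q} \<Longrightarrow> \<bar>u - v\<bar> < d1 \<Longrightarrow> \<bar>x u - x v\<bar> < \<epsilon>'"
    unfolding uniformly_continuous_on_def dist_real_def using \<epsilon>' by metis
  obtain d2 where d2: "d2 > 0" and d2r: "\<And>u v. u \<in> {0..} \<Longrightarrow> v \<in> {0..} \<Longrightarrow> \<bar>u - v\<bar> < d2 \<Longrightarrow> \<bar>r u - r v\<bar> < d1/2"
    using r_uc d1 unfolding uniformly_continuous_on_def dist_real_def
    by (metis half_gt_zero)
  define hm where "hm = min d2 (d1/4)"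
  have hm: "hm > 0" using d1 d2 hm_def by simp
  obtain K0 :: nat where K0: "real K0 > q / hm" using reals_Archimedean2 by blast
  show "\<exists>no. \<forall>k\<ge>no. norm (\<bar>x t - zh a r (q / real k) \<phi> (grid_floor (q / real k) t)\<bar> - 0) < \<epsilon>"
  proof (intro exI[of _ "max K0 1"] allI impI)
    fix k :: nat assume k: "k \<ge> max K0 1"
    define h where "h = q / real k"
    have k1: "real k \<ge> 1" using k by simp
    have h: "h > 0" using q_pos k1 h_def by simp
    have kh: "real k * h = q" using k1 h_def by simp
    have "real k > q / hm" using K0 k by simp
    then have "h < hm" using hm q_pos k1 unfolding h_def by (simp add: field_simps)
    then have hd2: "h < d2" and hd1: "4 * h < d1" unfolding hm_def by auto
    define i where "i = \<lfloor>t / h\<rfloor>"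
    have i0: "i \<ge> 0" using t h i_def by simp
    have ih: "of_int i * h \<le> t" "t < of_int i * h + h"
    proof -
      have "of_int i \<le> t / h" "t / h < of_int i + 1" unfolding i_def by linarith+
      then show "of_int i * h \<le> t" "t < of_int i * h + h" using h by (simp_all add: field_simps)
    qed
    have gf: "grid_floor h t = of_int i * h" unfolding grid_floor_def i_def ..
    have zhi: "zh a r h \<phi> (of_int i * h) = zeta a r h \<phi> i"
      unfolding zh_def Let_def using h by simp
    define \<zeta> where "\<zeta> = zeta a r h \<phi>"
    have sol0: "dde_sol a r q (of_int 0 * h) x" using sol by simp
    have rec: "\<And>n. n \<ge> 0 \<Longrightarrow> \<zeta> (n+1) = \<zeta> n - dA a h n * \<zeta> (n - int (kn r h n))"
      unfolding \<zeta>_def by (rule zeta_rec)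
    have init: "x (of_int j * h) = \<zeta> j" if "0 - int k \<le> j" "j \<le> 0" for j
    proof -
      have "of_int j * h \<ge> - q"
      proof -
        have "of_int (- int k) * h \<le> of_int j * h" using that h by (intro mult_right_mono) auto
        then have "of_int j * h \<ge> - real k * h" by simp
        then show ?thesis using kh by simp
      qed
      moreover have "of_int j * h \<le> 0" using that h by (simp add: mult_nonpos_nonneg)
      ultimately show ?thesis using x\<phi> zeta_init[OF that(2)] unfolding \<zeta>_def by simp
    qed
    have md: "\<bar>x (s - r s) - x (of_int (n - int (kn r h n)) * h)\<bar> \<le> \<epsilon>'"
      if n: "0 \<le> n" "n < 0 + int (nat i)" and s: "of_int n * h \<le> s" "s \<le> of_int (n+1) * h" for n s
    proof -
      have s0: "s \<ge> 0" using s n h by (meson mult_nonneg_nonneg of_int_0_le_iff less_imp_le order_trans)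
      have nh0: "of_int n * h \<ge> 0" using n h by simp
      have kp: "real (kn r h n) * h \<le> r (of_int n * h)" "r (of_int n * h) < (real (kn r h n) + 1) * h"
               "kn r h n \<le> k" using kn_props[OF h kh n(1)] by auto
      have s1: "s \<le> of_int n * h + h" using s by (simp add: algebra_simps)
      have rs: "\<bar>r s - r (of_int n * h)\<bar> < d1/2"
        using d2r[of s "of_int n * h"] s0 nh0 s(1) s1 hd2 by simp
      have eq: "of_int (n - int (kn r h n)) * h = of_int n * h - real (kn r h n) * h"
        by (simp add: algebra_simps)
      have dist: "\<bar>(s - r s) - of_int (n - int (kn r h n)) * h\<bar> < d1"
      proof -
        have rs1: "- (d1/2) < r s - r (of_int n * h)" "r s - r (of_int n * h) < d1/2"
          using rs abs_less_iff[of "r s - r (of_int n * h)" "d1/2"] by linarith+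
        show ?thesis unfolding abs_less_iff eq
          using rs1 kp(1,2) s(1) s1 h hd1 by (intro conjI; simp add: algebra_simps; linarith)
      qed
      have "n + 1 \<le> i" using n i0 by simp
      then have "of_int (n+1) * h \<le> of_int i * h" using h by (simp add: mult_right_mono del: of_int_add)
      then have sle: "s \<le> t" using s(2) ih(1) by simp
      have p1: "s - r s \<in> {-q..t+q}" using r_le[OF s0] r_nonneg[OF s0] s0 sle q_pos by auto
      have "real (kn r h n) * h \<le> q" using kp(3) h kh by (metis mult_right_mono of_nat_le_iff less_imp_le)
      then have p2: "of_int (n - int (kn r h n)) * h \<in> {-q..t+q}"
      proof -
        have kh0: "0 \<le> real (kn r h n) * h" using h by simp
        show ?thesis unfolding atLeastAtMost_iff eq
          using kh0 nh0 s(1) sle q_pos \<open>real (kn r h n) * h \<le> q\<close> by (intro conjI; linarith)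
      qed
      show ?thesis using d1x[OF p1 p2 dist] by simp
    qed
    have e1: "\<bar>x (of_int i * h) - \<zeta> i\<bar> \<le> \<epsilon>' * ((1 + M*h)^(nat i) - 1)"
      by (rule err_bound[OF h kh order.refl sol0 rec init md less_imp_le[OF \<epsilon>'] order.refl]) (use i0 in auto)
    have Mh: "0 \<le> M * h" using M_nonneg h by simp
    have "(1 + M*h)^(nat i) \<le> exp (M*h)^(nat i)" using Mh by (intro power_mono) auto
    also have "\<dots> = exp (real (nat i) * (M*h))" by (simp add: exp_of_nat_mult)
    also have "\<dots> \<le> E" unfolding E_def using ih(1) i0 M_nonneg
      by (simp add: algebra_simps mult_left_mono)
    finally have "(1 + M*h)^(nat i) \<le> E" .
    then have e2: "\<bar>x (of_int i * h) - \<zeta> i\<bar> \<le> \<epsilon>' * E"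
      using e1 \<epsilon>' by (smt (verit) mult_left_mono)
    have "\<bar>x t - x (of_int i * h)\<bar> < \<epsilon>'"
    proof -
      have "of_int i * h \<ge> 0" using i0 h by simp
      then show ?thesis using d1x[of t "of_int i * h"] ih hd1 h t q_pos by simp
    qed
    then have "\<bar>x t - \<zeta> i\<bar> < \<epsilon>' + \<epsilon>' * E" using e2 by linarith
    also have "\<epsilon>' + \<epsilon>' * E = \<epsilon> / 2"
    proof -
      have "\<epsilon>' + \<epsilon>' * E = \<epsilon>' * (E + 1)" by (simp add: algebra_simps)
      also have "\<dots> = \<epsilon> / 2"
      proof -
        have ne: "E + 1 \<noteq> 0" using E by simp
        have "\<epsilon> / (2 * (E + 1)) * (E + 1) = (\<epsilon> * (E + 1)) / (2 * (E + 1))" by simp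
        also have "\<dots> = \<epsilon> / 2" by (rule mult_divide_mult_cancel_right[OF ne])
        finally show ?thesis unfolding \<epsilon>'_def .
      qed
      finally show ?thesis .
    qed
    finally have "\<bar>x t - \<zeta> i\<bar> < \<epsilon>" using \<epsilon> by simp
    then show "norm (\<bar>x t - zh a r (q / real k) \<phi> (grid_floor (q / real k) t)\<bar> - 0) < \<epsilon>"
      using gf zhi unfolding h_def[symmetric] \<zeta>_def by simp
  qed
qed

end

locale dd2 = dd +
  fixes C T :: real
  assumes C1: "C \<ge> 1" and T0: "T \<ge> 0"
    and bnd: "\<And>\<sigma> x B t. \<sigma> \<ge> 0 \<Longrightarrow> dde_sol a r q \<sigma> x \<Longrightarrow> B > 0 \<Longrightarrow>
               (\<forall>\<theta>\<in>{\<sigma>-q..\<sigma>}. \<bar>x \<theta>\<bar> \<le> B) \<Longrightarrow> t \<ge> \<sigma> \<Longrightarrow> \<bar>x t\<bar> \<le> C * B"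
    and dec: "\<And>\<sigma> x B t. \<sigma> \<ge> 0 \<Longrightarrow> dde_sol a r q \<sigma> x \<Longrightarrow> B > 0 \<Longrightarrow>
               (\<forall>\<theta>\<in>{\<sigma>-q..\<sigma>}. \<bar>x \<theta>\<bar> \<le> B) \<Longrightarrow> t \<ge> \<sigma> + T \<Longrightarrow> \<bar>x t\<bar> \<le> B / 4"
begin

lemma block:
  fixes \<zeta> :: "int \<Rightarrow> real" and k N :: nat
  assumes h: "h > 0" and kh: "real k * h = q" and n0: "n0 \<ge> 0"
   and rec: "\<And>n. n \<ge> n0 \<Longrightarrow> \<zeta> (n+1) = \<zeta> n - dA a h n * \<zeta> (n - int (kn r h n))"
   and m: "m \<ge> n0 + int k"
   and S: "S > 0" and Sb: "\<And>j. m - 2 * int k \<le> j \<Longrightarrow> j \<le> m \<Longrightarrow> \<bar>\<zeta> j\<bar> \<le> S"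
   and N1: "real N * h \<ge> T + 2*q" and N2: "real N * h \<le> \<Theta>"
   and ucr: "\<And>u v. 0 \<le> u \<Longrightarrow> 0 \<le> v \<Longrightarrow> \<bar>u - v\<bar> \<le> h \<Longrightarrow> \<bar>r u - r v\<bar> \<le> w"
   and small: "M * C * (2*h + w) * exp (M * \<Theta>) \<le> 1/4"
  shows "\<And>n. m \<le> n \<Longrightarrow> n \<le> m + int N \<Longrightarrow> \<bar>\<zeta> n\<bar> \<le> (C+1) * S"
    and "\<And>n. m + int N - 2 * int k \<le> n \<Longrightarrow> n \<le> m + int N \<Longrightarrow> \<bar>\<zeta> n\<bar> \<le> S / 2"
proof -
  have k1: "k \<ge> 1" using kh q_pos by (cases k) auto
  have m0: "m \<ge> 0" using m n0 by simp
  define \<sigma> where "\<sigma> = of_int m * h"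
  have \<sigma>0: "\<sigma> \<ge> 0" using m0 h \<sigma>_def by simp
  have win: "{\<sigma> - q..\<sigma>} = {of_int (m - int k) * h .. of_int m * h}"
    using kh \<sigma>_def by (simp add: algebra_simps)
  have dz: "\<bar>\<zeta> (j+1) - \<zeta> j\<bar> \<le> (M*S) * h" if j: "m - int k \<le> j" "j < m" for j
  proof -
    have j0: "j \<ge> n0" "j \<ge> 0" using j m n0 by auto
    have knk: "kn r h j \<le> k" using kn_props(1)[OF h kh j0(2)] .
    have "\<zeta> (j+1) - \<zeta> j = - (dA a h j * \<zeta> (j - int (kn r h j)))" using rec[OF j0(1)] by simp
    then have "\<bar>\<zeta> (j+1) - \<zeta> j\<bar> = dA a h j * \<bar>\<zeta> (j - int (kn r h j))\<bar>"
      using dA_bounds(1)[OF h j0(2)] by (simp add: abs_mult)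
    also have "\<dots> \<le> (M * h) * S"
      using dA_bounds[OF h j0(2)] Sb[of "j - int (kn r h j)"] j knk
      by (intro mult_mono) auto
    finally show ?thesis by (simp add: algebra_simps)
  qed
  have MS0: "M * S \<ge> 0" using M_nonneg S by simp
  have mk: "m - int k < m" using k1 by simp
  have MCS0: "0 \<le> M*C*S" using M_nonneg C1 S by simp
  have \<psi>c: "continuous_on {\<sigma> - q..\<sigma>} (pl h \<zeta>)"
    unfolding win by (rule pl_cont[where \<zeta>=\<zeta>, OF h mk MS0 dz]) auto
  obtain x where sol: "dde_sol a r q \<sigma> x" and xw: "\<forall>\<theta>\<in>{\<sigma> - q..\<sigma>}. x \<theta> = pl h \<zeta> \<theta>"
    using exist_sol[OF \<sigma>0 \<psi>c] by blast
  have xwb: "\<forall>\<theta>\<in>{\<sigma> - q..\<sigma>}. \<bar>x \<theta>\<bar> \<le> S"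
  proof
    fix \<theta> assume th: "\<theta> \<in> {\<sigma> - q..\<sigma>}"
    have "\<bar>pl h \<zeta> \<theta>\<bar> \<le> S"
      using th unfolding win by (intro pl_bound[OF h mk]) (auto intro: Sb)
    then show "\<bar>x \<theta>\<bar> \<le> S" using xw th by simp
  qed
  have xb: "\<bar>x t\<bar> \<le> C * S" if "t \<ge> \<sigma> - q" for t
  proof (cases "t \<le> \<sigma>")
    case True
    then have "\<bar>x t\<bar> \<le> S" using xwb that by auto
    also have "S \<le> C * S" using C1 S by simp
    finally show ?thesis .
  next
    case False
    then show ?thesis using bnd[OF \<sigma>0 sol S xwb, of t] by simp
  qed
  have xlip1: "\<bar>x v - x u\<bar> \<le> (M*C*S) * (v - u)" if uv: "\<sigma> - q \<le> u" "u \<le> v" for u v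
  proof -
    have L1: "\<bar>x v - x u\<bar> \<le> (M*C*S) * (v - u)" if "\<sigma> \<le> u" "u \<le> v" for u v
      using sol_lip[OF sol \<sigma>0 xb that] by (simp add: mult.assoc)
    have L2: "\<bar>x v - x u\<bar> \<le> (M*C*S) * (v - u)" if "\<sigma> - q \<le> u" "u \<le> v" "v \<le> \<sigma>" for u v
    proof -
      have "\<bar>pl h \<zeta> v - pl h \<zeta> u\<bar> \<le> (M*S) * (v - u)"
        by (rule pl_lip_le[where \<zeta>=\<zeta>, OF h mk MS0 dz]) (use that win in auto)
      also have "\<dots> \<le> (M*C*S) * (v - u)"
      proof -
        have "M*S \<le> M*C*S" using mult_right_mono[OF C1 MS0] by (simp add: mult_ac)
        then show ?thesis by (rule mult_right_mono) (use that in auto)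
      qed
      finally show ?thesis using xw that by simp
    qed
    consider "\<sigma> \<le> u" | "v \<le> \<sigma>" | "u < \<sigma>" "\<sigma> < v" by linarith
    then show ?thesis
    proof cases
      case 1 then show ?thesis using L1 uv by simp
    next
      case 2 then show ?thesis using L2 uv by simp
    next
      case 3
      have "\<bar>x v - x u\<bar> \<le> \<bar>x v - x \<sigma>\<bar> + \<bar>x \<sigma> - x u\<bar>" by linarith
      also have "\<dots> \<le> (M*C*S) * (v - \<sigma>) + (M*C*S) * (\<sigma> - u)"
        using L1[of \<sigma> v] L2[of u \<sigma>] 3 uv by (intro add_mono) auto
      also have "\<dots> = (M*C*S) * (v - u)" by (simp add: algebra_simps)
      finally show ?thesis .
    qed
  qed
  have xlip: "\<bar>x v - x u\<bar> \<le> (M*C*S) * \<bar>v - u\<bar>" if "\<sigma> - q \<le> u" "\<sigma> - q \<le> v" for u v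
  proof (cases "u \<le> v")
    case True then show ?thesis using xlip1[of u v] that by simp
  next
    case False then show ?thesis using xlip1[of v u] that by (simp add: abs_minus_commute)
  qed
  have w0: "w \<ge> 0" using ucr[of 0 0] h by simp
  define \<rho> where "\<rho> = M*C*S*(2*h + w)"
  have \<rho>0: "\<rho> \<ge> 0" unfolding \<rho>_def using MS0 C1 h w0 M_nonneg S by simp
  have md: "\<bar>x (s - r s) - x (of_int (n - int (kn r h n)) * h)\<bar> \<le> \<rho>"
    if n: "m \<le> n" "n < m + int N" and s: "of_int n * h \<le> s" "s \<le> of_int (n+1) * h" for n s
  proof -
    have nn: "n \<ge> 0" using n m0 by simp
    have s0: "s \<ge> 0" using s nn h by (meson mult_nonneg_nonneg of_int_0_le_iff less_imp_le order_trans)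
    have nh0: "of_int n * h \<ge> 0" using nn h by simp
    have kp: "real (kn r h n) * h \<le> r (of_int n * h)" "r (of_int n * h) < (real (kn r h n) + 1) * h"
             "kn r h n \<le> k" using kn_props[OF h kh nn] by auto
    have rs: "\<bar>r s - r (of_int n * h)\<bar> \<le> w"
      using ucr[OF s0 nh0] s by (simp add: algebra_simps)
    have eq: "of_int (n - int (kn r h n)) * h = of_int n * h - real (kn r h n) * h"
      by (simp add: algebra_simps)
    have s1: "s \<le> of_int n * h + h" using s by (simp add: algebra_simps)
    have dist: "\<bar>(s - r s) - of_int (n - int (kn r h n)) * h\<bar> \<le> 2*h + w"
      using rs kp(1,2) s(1) s1 eq h by (simp add: algebra_simps abs_le_iff)
    have p1: "s - r s \<ge> \<sigma> - q" using r_le[OF s0] s(1) n(1) h \<sigma>_def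
      by (smt (verit) mult_right_mono of_int_le_iff)
    have "real (kn r h n) * h \<le> real k * h" using kp(3) h by simp
    then have p2: "of_int (n - int (kn r h n)) * h \<ge> \<sigma> - q" using eq kh n(1) h \<sigma>_def
      by (smt (verit) mult_right_mono of_int_le_iff)
    have "\<bar>x (s - r s) - x (of_int (n - int (kn r h n)) * h)\<bar> \<le> (M*C*S) * \<bar>(s - r s) - of_int (n - int (kn r h n)) * h\<bar>"
      using xlip[OF p2 p1] by (simp add: abs_minus_commute)
    also have "\<dots> \<le> (M*C*S) * (2*h + w)"
      using dist MCS0 by (intro mult_left_mono) auto
    finally show ?thesis unfolding \<rho>_def by simp
  qed
  have sol': "dde_sol a r q (of_int m * h) x" using sol \<sigma>_def by simp
  have rec': "\<And>n. n \<ge> m \<Longrightarrow> \<zeta> (n+1) = \<zeta> n - dA a h n * \<zeta> (n - int (kn r h n))"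
    using rec m n0 by simp
  have init: "x (of_int j * h) = \<zeta> j" if "m - int k \<le> j" "j \<le> m" for j
  proof -
    have "of_int j * h \<in> {\<sigma> - q..\<sigma>}" unfolding win using that h by (simp add: mult_right_mono)
    then show ?thesis using xw pl_grid[OF h] by simp
  qed
  have err: "\<bar>x (of_int n * h) - \<zeta> n\<bar> \<le> S / 4" if n: "m \<le> n" "n \<le> m + int N" for n
  proof -
    define j where "j = nat (n - m)"
    have j: "j \<le> N" "n \<le> m + int j" using n j_def by auto
    have e1: "\<bar>x (of_int n * h) - \<zeta> n\<bar> \<le> \<rho> * ((1 + M*h)^j - 1)"
      by (rule err_bound[OF h kh m0 sol' rec' init md \<rho>0 j(1)]) (use n j k1 in auto)
    have Mh: "0 \<le> M * h" using M_nonneg h by simp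
    have "(1 + M*h)^j \<le> (1 + M*h)^N" using Mh j(1) by (simp add: power_increasing)
    also have "\<dots> \<le> exp (M*h)^N" using Mh by (intro power_mono) auto
    also have "\<dots> = exp (real N * (M*h))" by (simp add: exp_of_nat_mult)
    also have "\<dots> \<le> exp (M * \<Theta>)" using N2 M_nonneg
      by (simp add: mult_left_mono algebra_simps)
    finally have pw: "(1 + M*h)^j \<le> exp (M * \<Theta>)" .
    have "\<rho> * ((1 + M*h)^j - 1) \<le> \<rho> * exp (M * \<Theta>)" using pw \<rho>0 by (intro mult_left_mono) auto
    also have "\<dots> = S * (M * C * (2*h + w) * exp (M * \<Theta>))" unfolding \<rho>_def by (simp add: algebra_simps)
    also have "\<dots> \<le> S * (1/4)" using small S by (intro mult_left_mono) auto
    finally show ?thesis using e1 by simp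
  qed
  show "\<bar>\<zeta> n\<bar> \<le> (C+1) * S" if n: "m \<le> n" "n \<le> m + int N" for n
  proof -
    have "of_int n * h \<ge> \<sigma>" using n h \<sigma>_def by (simp add: mult_right_mono)
    then have "\<bar>x (of_int n * h)\<bar> \<le> C * S" using bnd[OF \<sigma>0 sol S xwb] by simp
    moreover have "\<bar>x (of_int n * h) - \<zeta> n\<bar> \<le> S / 4" using err[OF n] .
    moreover have "\<bar>\<zeta> n\<bar> \<le> \<bar>x (of_int n * h)\<bar> + \<bar>x (of_int n * h) - \<zeta> n\<bar>"
      using abs_triangle_ineq4[of "x (of_int n * h)" "x (of_int n * h) - \<zeta> n"] by simp
    moreover have "(C+1) * S = C * S + S" by (simp add: algebra_simps)
    ultimately show ?thesis using S by linarith
  qed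
  have N2k: "int N \<ge> 2 * int k"
  proof -
    have "real N * h \<ge> real (2*k) * h" using N1 T0 kh by simp
    then have "real N \<ge> real (2*k)" using h by simp
    then show ?thesis by linarith
  qed
  show "\<bar>\<zeta> n\<bar> \<le> S / 2" if n: "m + int N - 2 * int k \<le> n" "n \<le> m + int N" for n
  proof -
    have nm: "m \<le> n" using n N2k by simp
    have "of_int n * h \<ge> of_int (m + int N - 2 * int k) * h" using n h by (simp add: mult_right_mono)
    also have "of_int (m + int N - 2 * int k) * h = \<sigma> + real N * h - 2 * q"
      using kh \<sigma>_def by (simp add: algebra_simps)
    finally have "of_int n * h \<ge> \<sigma> + T" using N1 by simp
    then have "\<bar>x (of_int n * h)\<bar> \<le> S / 4" using dec[OF \<sigma>0 sol S xwb] by simp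
    moreover have "\<bar>x (of_int n * h) - \<zeta> n\<bar> \<le> S / 4" using err[OF nm n(2)] .
    moreover have "\<bar>\<zeta> n\<bar> \<le> \<bar>x (of_int n * h)\<bar> + \<bar>x (of_int n * h) - \<zeta> n\<bar>"
      using abs_triangle_ineq4[of "x (of_int n * h)" "x (of_int n * h) - \<zeta> n"] by simp
    ultimately show ?thesis by linarith
  qed
qed

lemma global:
  fixes \<zeta> :: "int \<Rightarrow> real" and k N :: nat
  assumes h: "h > 0" and kh: "real k * h = q" and n0: "n0 \<ge> 0"
   and rec: "\<And>n. n \<ge> n0 \<Longrightarrow> \<zeta> (n+1) = \<zeta> n - dA a h n * \<zeta> (n - int (kn r h n))"
   and S0: "S0 > 0" and init: "\<And>j. n0 - int k \<le> j \<Longrightarrow> j \<le> n0 \<Longrightarrow> \<bar>\<zeta> j\<bar> \<le> S0"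
   and N1: "real N * h \<ge> T + 2*q" and N2: "real N * h \<le> \<Theta>"
   and ucr: "\<And>u v. 0 \<le> u \<Longrightarrow> 0 \<le> v \<Longrightarrow> \<bar>u - v\<bar> \<le> h \<Longrightarrow> \<bar>r u - r v\<bar> \<le> w"
   and small: "M * C * (2*h + w) * exp (M * \<Theta>) \<le> 1/4"
  shows "\<And>n. n \<ge> n0 \<Longrightarrow> \<bar>\<zeta> n\<bar> \<le> (C+1) * exp (M*q) * S0"
    and "\<And>i n. n \<ge> n0 + int k + int (i*N) \<Longrightarrow> \<bar>\<zeta> n\<bar> \<le> (C+1) * exp (M*q) * S0 / 2^i"
proof -
  have k1: "k \<ge> 1" using kh q_pos by (cases k) auto
  have Mh: "0 \<le> M * h" using M_nonneg h by simp
  have growth: "\<And>n. n0 - int k \<le> n \<Longrightarrow> n \<le> n0 + int j \<Longrightarrow> \<bar>\<zeta> n\<bar> \<le> (1 + M*h)^j * S0" for j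
  proof (induction j)
    case 0 then show ?case using init by simp
  next
    case (Suc j)
    show ?case
    proof (cases "n \<le> n0 + int j")
      case True
      then have "\<bar>\<zeta> n\<bar> \<le> (1 + M*h)^j * S0" using Suc by simp
      also have "\<dots> \<le> (1 + M*h)^Suc j * S0" using Mh S0 by (intro mult_right_mono power_increasing) auto
      finally show ?thesis .
    next
      case False
      define n' where "n' = n0 + int j"
      have nn: "n = n' + 1" using False Suc.prems n'_def by simp
      have n'0: "n' \<ge> 0" "n' \<ge> n0" using n0 n'_def by auto
      have knk: "kn r h n' \<le> k" using kn_props(1)[OF h kh n'0(1)] .
      have b1: "\<bar>\<zeta> n'\<bar> \<le> (1 + M*h)^j * S0" using Suc.IH[of n'] n'_def n0 by simp
      have b2: "\<bar>\<zeta> (n' - int (kn r h n'))\<bar> \<le> (1 + M*h)^j * S0"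
        using Suc.IH[of "n' - int (kn r h n')"] n'_def knk by simp
      have "\<bar>\<zeta> n\<bar> \<le> \<bar>\<zeta> n'\<bar> + dA a h n' * \<bar>\<zeta> (n' - int (kn r h n'))\<bar>"
      proof -
        have "\<bar>\<zeta> n' - dA a h n' * \<zeta> (n' - int (kn r h n'))\<bar> \<le> \<bar>\<zeta> n'\<bar> + \<bar>dA a h n' * \<zeta> (n' - int (kn r h n'))\<bar>"
          by (rule abs_triangle_ineq4)
        then show ?thesis using rec[OF n'0(2)] nn dA_bounds(1)[OF h n'0(1)] by (simp add: abs_mult)
      qed
      also have "\<dots> \<le> (1 + M*h)^j * S0 + (M*h) * ((1 + M*h)^j * S0)"
        using b1 b2 dA_bounds[OF h n'0(1)] by (intro add_mono mult_mono) auto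
      also have "\<dots> = (1 + M*h)^Suc j * S0" by (simp add: algebra_simps)
      finally show ?thesis .
    qed
  qed
  define S1 where "S1 = exp (M*q) * S0"
  have S1: "S1 > 0" using S0 S1_def by simp
  have pk: "(1 + M*h)^j \<le> exp (M*q)" if "j \<le> k" for j
  proof -
    have "(1 + M*h)^j \<le> (1 + M*h)^k" using Mh that by (simp add: power_increasing)
    also have "\<dots> \<le> exp (M*h)^k" using Mh by (intro power_mono) auto
    also have "\<dots> = exp (M*q)" using kh by (simp flip: exp_of_nat_mult add: algebra_simps)
    finally show ?thesis .
  qed
  have g1: "\<bar>\<zeta> n\<bar> \<le> S1" if "n0 - int k \<le> n" "n \<le> n0 + int k" for n
  proof -
    have "\<bar>\<zeta> n\<bar> \<le> (1 + M*h)^k * S0" using growth[of n k] that by simp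
    also have "\<dots> \<le> S1" unfolding S1_def using pk[of k] S0 by (intro mult_right_mono) auto
    finally show ?thesis .
  qed
  define m1 where "m1 = n0 + int k"
  have blocks: "\<And>j. m1 + int (i*N) - 2 * int k \<le> j \<Longrightarrow> j \<le> m1 + int (i*N) \<Longrightarrow> \<bar>\<zeta> j\<bar> \<le> S1 / 2^i" for i
  proof (induction i)
    case 0 then show ?case using g1 m1_def by simp
  next
    case (Suc i)
    have "\<bar>\<zeta> j\<bar> \<le> (S1 / 2^i) / 2"
      by (rule block(2)[OF h kh n0 rec _ _ Suc.IH N1 N2 ucr small, of "m1 + int (i*N)"])
         (use Suc.prems S1 m1_def in \<open>auto simp: algebra_simps\<close>)
    then show ?case by simp
  qed
  have main: "\<bar>\<zeta> n\<bar> \<le> (C+1) * S1 / 2^i" if "m1 + int (i*N) \<le> n" "n \<le> m1 + int (i*N) + int N" for i n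
  proof -
    have "\<bar>\<zeta> n\<bar> \<le> (C+1) * (S1 / 2^i)"
      by (rule block(1)[OF h kh n0 rec _ _ blocks N1 N2 ucr small, of "m1 + int (i*N)"])
         (use that S1 m1_def in auto)
    then show ?thesis by simp
  qed
  have N2k: "int N \<ge> 2 * int k"
  proof -
    have "real N * h \<ge> real (2*k) * h" using N1 T0 kh by simp
    then have "real N \<ge> real (2*k)" using h by simp
    then show ?thesis by linarith
  qed
  have Npos: "int N > 0" using N2k k1 by simp
  have C0: "C + 1 > 0" using C1 by simp
  have cover: "\<exists>i. i' \<le> i \<and> m1 + int (i*N) \<le> n \<and> n \<le> m1 + int (i*N) + int N"
    if "n \<ge> m1 + int (i'*N)" for n i'
  proof -
    define d where "d = n - m1"
    define qq where "qq = d div int N"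
    have d0: "d \<ge> int (i'*N)" using that d_def by simp
    have dm: "d = qq * int N + d mod int N" unfolding qq_def by simp
    have mb: "0 \<le> d mod int N" "d mod int N < int N" using Npos by auto
    have "int (i'*N) div int N = int i'" using Npos by simp
    moreover have "int (i'*N) div int N \<le> qq" unfolding qq_def by (rule zdiv_mono1[OF d0 Npos])
    ultimately have qi: "int i' \<le> qq" by simp
    show ?thesis
    proof (intro exI[of _ "nat qq"] conjI)
      show "i' \<le> nat qq" using qi by simp
      have "int (nat qq * N) = qq * int N" using qi by simp
      then show "m1 + int (nat qq * N) \<le> n" "n \<le> m1 + int (nat qq * N) + int N"
        using dm mb d_def by linarith+
    qed
  qed
  show "\<bar>\<zeta> n\<bar> \<le> (C+1) * exp (M*q) * S0" if "n \<ge> n0" for n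
  proof (cases "n \<le> n0 + int k")
    case True
    then have "\<bar>\<zeta> n\<bar> \<le> S1" using g1 that by simp
    also have "\<dots> \<le> (C+1) * S1" using C1 S1 by simp
    finally show ?thesis unfolding S1_def by (simp add: mult.assoc)
  next
    case False
    then obtain i where i: "m1 + int (i*N) \<le> n" "n \<le> m1 + int (i*N) + int N"
      using cover[of 0 n] m1_def by auto
    have "\<bar>\<zeta> n\<bar> \<le> (C+1) * S1 / 2^i" by (rule main[OF i])
    also have "\<dots> \<le> (C+1) * S1" using C0 S1 by (simp add: divide_le_eq mult_pos_pos)
    finally show ?thesis unfolding S1_def by (simp add: mult.assoc)
  qed
  show "\<bar>\<zeta> n\<bar> \<le> (C+1) * exp (M*q) * S0 / 2^i" if "n \<ge> n0 + int k + int (i*N)" for i n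
  proof -
    have "n \<ge> m1 + int (i*N)" using that m1_def by simp
    then obtain i2 where i2: "i \<le> i2" "m1 + int (i2*N) \<le> n" "n \<le> m1 + int (i2*N) + int N"
      using cover[of i n] by blast
    have "\<bar>\<zeta> n\<bar> \<le> (C+1) * S1 / 2^i2" by (rule main[OF i2(2,3)])
    also have "\<dots> \<le> (C+1) * S1 / 2^i"
      using C0 S1 i2(1) by (intro divide_left_mono) (auto simp: power_increasing)
    finally show ?thesis unfolding S1_def by (simp add: mult.assoc)
  qed
qed

lemma diffUAS:
  fixes k N :: nat
  assumes h: "h > 0" and kh: "real k * h = q"
   and N1: "real N * h \<ge> T + 2*q" and N2: "real N * h \<le> \<Theta>"
   and ucr: "\<And>u v. 0 \<le> u \<Longrightarrow> 0 \<le> v \<Longrightarrow> \<bar>u - v\<bar> \<le> h \<Longrightarrow> \<bar>r u - r v\<bar> \<le> w"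
   and small: "M * C * (2*h + w) * exp (M * \<Theta>) \<le> 1/4"
  shows "diff_UAS a r h k"
proof -
  define K where "K = (C+1) * exp (M*q)"
  have K: "K > 0" using C1 K_def by simp
  have G1: "\<bar>\<zeta> n\<bar> \<le> K * S0"
    if "diff_sol a r h n0 \<zeta>" "n0 \<ge> 0" "S0 > 0" "\<forall>j\<in>{n0 - int k..n0}. \<bar>\<zeta> j\<bar> \<le> S0" "n \<ge> n0" for \<zeta> n0 S0 n
    using global(1)[OF h kh that(2) _ that(3) _ N1 N2 ucr small, where \<zeta>=\<zeta> and n=n] that unfolding diff_sol_def K_def
    by auto
  have G2: "\<bar>\<zeta> n\<bar> \<le> K * S0 / 2^i"
    if "diff_sol a r h n0 \<zeta>" "n0 \<ge> 0" "S0 > 0" "\<forall>j\<in>{n0 - int k..n0}. \<bar>\<zeta> j\<bar> \<le> S0"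
       "n \<ge> n0 + int k + int (i*N)" for \<zeta> n0 S0 n i
    using global(2)[OF h kh that(2) _ that(3) _ N1 N2 ucr small, where \<zeta>=\<zeta> and n=n and i=i] that unfolding diff_sol_def K_def
    by auto
  show ?thesis
    unfolding diff_UAS_def
  proof (intro conjI allI impI)
    fix \<epsilon> :: real assume \<epsilon>: "\<epsilon> > 0"
    show "\<exists>\<delta>>0. \<forall>n0\<ge>0. \<forall>\<zeta>. diff_sol a r h n0 \<zeta> \<and> (\<forall>j\<in>{n0 - int k..n0}. \<bar>\<zeta> j\<bar> < \<delta>)
        \<longrightarrow> (\<forall>n\<ge>n0. \<bar>\<zeta> n\<bar> < \<epsilon>)"
    proof (intro exI[of _ "\<epsilon> / (2*K)"] conjI allI impI)
      show "\<epsilon> / (2*K) > 0" using \<epsilon> K by simp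
      fix n0 :: int and \<zeta> and n :: int
      assume n0: "n0 \<ge> 0" and z: "diff_sol a r h n0 \<zeta> \<and> (\<forall>j\<in>{n0 - int k..n0}. \<bar>\<zeta> j\<bar> < \<epsilon> / (2*K))"
        and n: "n \<ge> n0"
      have "\<bar>\<zeta> n\<bar> \<le> K * (\<epsilon> / (2*K))"
        by (rule G1) (use z n0 n \<epsilon> K in \<open>auto simp: less_imp_le\<close>)
      also have "\<dots> < \<epsilon>" using K \<epsilon> by simp
      finally show "\<bar>\<zeta> n\<bar> < \<epsilon>" .
    qed
  next
    show "\<exists>\<delta>0>0. \<forall>\<eta>>0. \<exists>Nn::int. \<forall>n0\<ge>0. \<forall>\<zeta>. diff_sol a r h n0 \<zeta> \<and> (\<forall>j\<in>{n0 - int k..n0}. \<bar>\<zeta> j\<bar> < \<delta>0)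
        \<longrightarrow> (\<forall>n\<ge>n0 + Nn. \<bar>\<zeta> n\<bar> < \<eta>)"
    proof (rule exI[of _ "1::real"], rule conjI, simp, intro allI impI)
      fix \<eta> :: real assume \<eta>: "\<eta> > 0"
      obtain i where i: "K / \<eta> < 2^i" using real_arch_pow[of 2 "K / \<eta>"] by auto
      have Ki: "K / 2^i < \<eta>" using i \<eta> by (simp add: field_simps)
      show "\<exists>Nn::int. \<forall>n0\<ge>0. \<forall>\<zeta>. diff_sol a r h n0 \<zeta> \<and> (\<forall>j\<in>{n0 - int k..n0}. \<bar>\<zeta> j\<bar> < 1)
        \<longrightarrow> (\<forall>n\<ge>n0 + Nn. \<bar>\<zeta> n\<bar> < \<eta>)"
      proof (intro exI[of _ "int k + int (i*N)"] allI impI)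
        fix n0 :: int and \<zeta> and n :: int
        assume n0: "n0 \<ge> 0" and z: "diff_sol a r h n0 \<zeta> \<and> (\<forall>j\<in>{n0 - int k..n0}. \<bar>\<zeta> j\<bar> < 1)"
          and n: "n \<ge> n0 + (int k + int (i*N))"
        have "\<bar>\<zeta> n\<bar> \<le> K * 1 / 2^i"
          by (rule G2) (use z n0 n in \<open>auto simp: less_imp_le\<close>)
        then show "\<bar>\<zeta> n\<bar> < \<eta>" using Ki by simp
      qed
    qed
  qed
qed

end


theorem corollary4p2:
  fixes a r :: "real \<Rightarrow> real" and q :: real
  assumes q_pos: "q > 0"
    and a_cont: "continuous_on {0..} a"
    and a_nonneg: "\<forall>t\<ge>0. a t \<ge> 0"
    and r_range: "\<forall>t\<ge>0. 0 \<le> r t \<and> r t \<le> q"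
    and q_sup: "q = (SUP t\<in>{0..}. r t)"
    and A1: "dde_UAS a r q"
    and A2: "\<exists>M. \<forall>t\<ge>0. \<bar>a t\<bar> \<le> M"
    and A3: "uniformly_continuous_on {0..} r"
  shows "(\<forall>\<phi> x. continuous_on {-q..0} \<phi> \<and> dde_sol a r q 0 x \<and> (\<forall>\<theta>\<in>{-q..0}. x \<theta> = \<phi> \<theta>) \<longrightarrow>
            (\<forall>t>0. (\<lambda>k::nat. \<bar>x t - zh a r (q / real k) \<phi> (grid_floor (q / real k) t)\<bar>)
                     \<longlonglongrightarrow> 0))
       \<and> (\<exists>K::nat. \<forall>k\<ge>K. k \<ge> 1 \<and> diff_UAS a r (q / real k) k)"
proof -
  obtain M0 where M0: "\<forall>t\<ge>0. \<bar>a t\<bar> \<le> M0" using A2 by blast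
  interpret dd a r q M0
  proof
    show "q > 0" by (rule q_pos)
    show "continuous_on {0..} a" by (rule a_cont)
    show "uniformly_continuous_on {0..} r" by (rule A3)
    fix t :: real assume t: "t \<ge> 0"
    show "a t \<ge> 0" using a_nonneg t by simp
    show "0 \<le> r t" using r_range t by simp
    show "r t \<le> q" using r_range t by simp
    show "a t \<le> M0" using M0 t by force
  qed
  have P1: "\<forall>\<phi> x. continuous_on {-q..0} \<phi> \<and> dde_sol a r q 0 x \<and> (\<forall>\<theta>\<in>{-q..0}. x \<theta> = \<phi> \<theta>) \<longrightarrow>
            (\<forall>t>0. (\<lambda>k::nat. \<bar>x t - zh a r (q / real k) \<phi> (grid_floor (q / real k) t)\<bar>) \<longlonglongrightarrow> 0)"
    using part1 by blast
  obtain C where C: "C \<ge> 1" and Cb: "\<forall>\<sigma> x B. \<sigma> \<ge> 0 \<longrightarrow> dde_sol a r q \<sigma> x \<longrightarrow> B > 0 \<longrightarrow>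
           (\<forall>\<theta>\<in>{\<sigma>-q..\<sigma>}. \<bar>x \<theta>\<bar> \<le> B) \<longrightarrow> (\<forall>t\<ge>\<sigma>. \<bar>x t\<bar> \<le> C * B)"
    using uas_bound[OF A1] by blast
  obtain T where T: "T \<ge> 0" and Td: "\<forall>\<sigma> x B. \<sigma> \<ge> 0 \<longrightarrow> dde_sol a r q \<sigma> x \<longrightarrow> B > 0 \<longrightarrow>
           (\<forall>\<theta>\<in>{\<sigma>-q..\<sigma>}. \<bar>x \<theta>\<bar> \<le> B) \<longrightarrow> (\<forall>t\<ge>\<sigma>+T. \<bar>x t\<bar> \<le> B / 4)"
    using uas_decay[OF A1] by blast
  interpret dd2 a r q M0 C T
    by (unfold_locales) (use C T Cb Td in blast)+
  define \<Theta> where "\<Theta> = 3*q + T"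
  define P where "P = M0 * C * exp (M0 * \<Theta>)"
  have P0: "P \<ge> 0" unfolding P_def using M_nonneg C by simp
  define w0 where "w0 = 1 / (16 * (P + 1))"
  have w0: "w0 > 0" using P0 w0_def by simp
  obtain d where d: "d > 0" and dr: "\<And>u v. u \<in> {0..} \<Longrightarrow> v \<in> {0..} \<Longrightarrow> dist u v < d \<Longrightarrow> dist (r u) (r v) < w0"
    using A3 w0 unfolding uniformly_continuous_on_def by metis
  define hm where "hm = min d (w0/2)"
  have hm: "hm > 0" using d w0 hm_def by simp
  obtain Kn :: nat where Kn: "real Kn > q / hm" using reals_Archimedean2 by blast
  have P2: "\<forall>k\<ge>max Kn 1. k \<ge> 1 \<and> diff_UAS a r (q / real k) k"
  proof (intro allI impI conjI)
    fix k :: nat assume k: "k \<ge> max Kn 1"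
    show "k \<ge> 1" using k by simp
    define h where "h = q / real k"
    have k1: "real k \<ge> 1" using k by simp
    have h: "h > 0" using q_pos k1 h_def by simp
    have kh: "real k * h = q" using k1 h_def by simp
    have "real k > q / hm" using Kn k by simp
    then have "h < hm" using hm q_pos k1 unfolding h_def by (simp add: field_simps)
    then have hd: "h < d" and hw: "h < w0/2" unfolding hm_def by auto
    have "1 * h \<le> real k * h" using k1 h by (intro mult_right_mono) auto
    then have hq: "h \<le> q" using kh by simp
    define N where "N = 2*k + nat \<lceil>T / h\<rceil>"
    have cT: "real (nat \<lceil>T / h\<rceil>) = of_int \<lceil>T / h\<rceil>" using T h by simp
    have c1: "of_int \<lceil>T / h\<rceil> * h \<ge> T"
    proof -
      have "T / h * h \<le> of_int \<lceil>T / h\<rceil> * h"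
        by (rule mult_right_mono[OF le_of_int_ceiling]) (use h in simp)
      then show ?thesis using h by simp
    qed
    have c2: "of_int \<lceil>T / h\<rceil> * h \<le> T + h"
    proof -
      have "of_int \<lceil>T / h\<rceil> * h \<le> (T / h + 1) * h"
        by (rule mult_right_mono[OF of_int_ceiling_le_add_one]) (use h in simp)
      also have "(T / h + 1) * h = T + h" using h by (simp add: distrib_right)
      finally show ?thesis .
    qed
    have NH: "real N * h = 2 * q + of_int \<lceil>T / h\<rceil> * h"
      unfolding N_def using cT kh by (simp add: algebra_simps)
    have N1: "real N * h \<ge> T + 2*q" using NH c1 by simp
    have N2: "real N * h \<le> \<Theta>" using NH c2 hq unfolding \<Theta>_def by simp
    have ucr: "\<bar>r u - r v\<bar> \<le> w0" if "0 \<le> u" "0 \<le> v" "\<bar>u - v\<bar> \<le> h" for u v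
      using dr[of u v] that hd by (simp add: dist_real_def)
    have small: "M0 * C * (2*h + w0) * exp (M0 * \<Theta>) \<le> 1/4"
    proof -
      have "M0 * C * (2*h + w0) * exp (M0 * \<Theta>) = P * (2*h + w0)" unfolding P_def by (simp add: algebra_simps)
      also have "\<dots> \<le> (P + 1) * (2 * w0)" using P0 hw h w0 by (intro mult_mono) auto
      also have "\<dots> = 1/8" unfolding w0_def using P0 by simp
      finally show ?thesis by simp
    qed
    show "diff_UAS a r (q / real k) k"
      using diffUAS[OF h kh N1 N2 ucr small] unfolding h_def .
  qed
  show ?thesis using P1 P2 by blast
qed

end
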